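(* Let $G$ be a connected finite simple graph on the vertex set $\{1,\ldots,d\}$ with $d\ge 2$. Then the symmetric edge polytope $\mathcal{P}^{\pm}_G$, regarded as a Fano polytope in $\mathbb{R}^{d-1}$ via the identification $\phi:\mathbb{R}^{d-1}\to\mathcal{H}$, cannot split if and only if $G$ is 2-connected.
   Context: For an edge $e=\{i,j\}$ set $\sigma(e)=\mathbf{e}_i-\mathbf{e}_j\in\mathbb{R}^d$; $\mathcal{P}^{\pm}_G$ is the convex hull of $\{\pm\sigma(e): e\in E(G)\}$. It lies in $\mathcal{H}=\{x: x_1+\cdots+x_d=0\}$, identified with $\mathbb{R}^{d-1}$ via $\phi(y_1,\ldots,y_{d-1})=(y_1,\ldots,y_{d-1},-(y_1+\cdots+y_{d-1}))$; it is then a Fano polytope (a full-dimensional integral polytope whose only interior lattice point is the origin). A Fano polytope $\mathcal{P}\subset\mathbb{R}^D$ splits if, after a unimodular change of lattice coordinates (an element of $GL_D(\mathbb{Z})$, e.g. a renumbering of coordinates), there are $D_1,D_2\ge1$ with $D_1+D_2=D$ and Fano polytopes $\mathcal{P}_1\subset\mathbb{R}^{D_1}$, $\mathcal{P}_2\subset\mathbb{R}^{D_2}$ such that $\mathcal{P}=\operatorname{conv}(\{(a,\mathbf{0}):a\in\mathcal{P}_1\}\cup\{(\mathbf{0},b):b\in\mathcal{P}_2\})$. A connected graph $G$ is 2-connected if for every vertex $i$ the induced subgraph on $V(G)\setminus\{i\}$ is connected. *)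

theory Defs
  imports "HOL-Analysis.Analysis"
begin

definition simple_graph :: "nat \<Rightarrow> nat set set \<Rightarrow> bool" where
  "simple_graph d E \<longleftrightarrow>
     (\<forall>e\<in>E. \<exists>i j. e = {i, j} \<and> i \<noteq> j \<and> i \<in> {1..d} \<and> j \<in> {1..d})"

definition connected_on :: "nat set \<Rightarrow> nat set set \<Rightarrow> bool" where
  "connected_on V E \<longleftrightarrow>
     (\<forall>u\<in>V. \<forall>v\<in>V. (\<lambda>a b. a \<in> V \<and> b \<in> V \<and> {a, b} \<in> E)\<^sup>*\<^sup>* u v)"

definition graph_connected :: "nat \<Rightarrow> nat set set \<Rightarrow> bool" where
  "graph_connected d E \<longleftrightarrow> connected_on {1..d} E"

definition two_connected :: "nat \<Rightarrow> nat set set \<Rightarrow> bool" where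
  "two_connected d E \<longleftrightarrow> graph_connected d E \<and>
     (\<forall>i\<in>{1..d}. connected_on ({1..d} - {i}) E)"

section \<open>R^D as functions nat => real vanishing from index D on\<close>

definition Rn :: "nat \<Rightarrow> (nat \<Rightarrow> real) set" where
  "Rn D = {x. \<forall>k\<ge>D. x k = 0}"

definition Zn :: "nat \<Rightarrow> (nat \<Rightarrow> real) set" where
  "Zn D = {x \<in> Rn D. \<forall>k<D. x k \<in> \<int>}"

definition conv :: "(nat \<Rightarrow> real) set \<Rightarrow> (nat \<Rightarrow> real) set" where
  "conv S = {x. \<exists>F c. finite F \<and> F \<subseteq> S \<and> F \<noteq> {} \<and> (\<forall>v\<in>F. c v \<ge> 0)
       \<and> sum c F = 1 \<and> x = (\<lambda>k. \<Sum>v\<in>F. c v * v k)}"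

definition aff_hull :: "(nat \<Rightarrow> real) set \<Rightarrow> (nat \<Rightarrow> real) set" where
  "aff_hull S = {x. \<exists>F c. finite F \<and> F \<subseteq> S \<and> F \<noteq> {}
       \<and> sum c F = 1 \<and> x = (\<lambda>k. \<Sum>v\<in>F. c v * v k)}"

text \<open>Interior of P inside R^D (box neighbourhoods give the standard topology).\<close>
definition interior_in :: "nat \<Rightarrow> (nat \<Rightarrow> real) set \<Rightarrow> (nat \<Rightarrow> real) set" where
  "interior_in D P = {x \<in> Rn D. \<exists>e>0. \<forall>y\<in>Rn D. (\<forall>k<D. \<bar>y k - x k\<bar> < e) \<longrightarrow> y \<in> P}"

definition integral_polytope :: "nat \<Rightarrow> (nat \<Rightarrow> real) set \<Rightarrow> bool" where
  "integral_polytope D P \<longleftrightarrow> (\<exists>V. finite V \<and> V \<subseteq> Zn D \<and> P = conv V)"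

definition full_dimensional :: "nat \<Rightarrow> (nat \<Rightarrow> real) set \<Rightarrow> bool" where
  "full_dimensional D P \<longleftrightarrow> aff_hull P = Rn D"

definition fano :: "nat \<Rightarrow> (nat \<Rightarrow> real) set \<Rightarrow> bool" where
  "fano D P \<longleftrightarrow> integral_polytope D P \<and> full_dimensional D P
      \<and> Zn D \<inter> interior_in D P = {(\<lambda>_. 0)}"

definition unimodular :: "nat \<Rightarrow> (nat \<Rightarrow> nat \<Rightarrow> int) \<Rightarrow> bool" where
  "unimodular D U \<longleftrightarrow> (\<exists>W. \<forall>i<D. \<forall>j<D.
      (\<Sum>k<D. U i k * W k j) = (if i = j then 1 else 0) \<and>
      (\<Sum>k<D. W i k * U k j) = (if i = j then 1 else 0))"

definition lin_map :: "nat \<Rightarrow> (nat \<Rightarrow> nat \<Rightarrow> int) \<Rightarrow> (nat \<Rightarrow> real) \<Rightarrow> (nat \<Rightarrow> real)" where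
  "lin_map D U x = (\<lambda>i. if i < D then (\<Sum>k<D. of_int (U i k) * x k) else 0)"

definition shift_by :: "nat \<Rightarrow> (nat \<Rightarrow> real) \<Rightarrow> (nat \<Rightarrow> real)" where
  "shift_by D1 b = (\<lambda>k. if k < D1 then 0 else b (k - D1))"

definition splits :: "nat \<Rightarrow> (nat \<Rightarrow> real) set \<Rightarrow> bool" where
  "splits D P \<longleftrightarrow> (\<exists>U D1 D2 P1 P2. unimodular D U \<and> D1 \<ge> 1 \<and> D2 \<ge> 1 \<and> D1 + D2 = D
      \<and> fano D1 P1 \<and> fano D2 P2
      \<and> lin_map D U ` P = conv (P1 \<union> shift_by D1 ` P2))"

text \<open>sigma(e) = e_i - e_j in R^d, coordinates indexed by vertices 1..d.\<close>
definition sigma :: "nat \<Rightarrow> nat \<Rightarrow> (nat \<Rightarrow> real)" where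
  "sigma i j = (\<lambda>k. (if k = i then 1 else 0) - (if k = j then 1 else 0))"

text \<open>Inverse of phi on H: keep coordinates 1..d-1, as indices 0..d-2 of R^(d-1).\<close>
definition phi_inv :: "nat \<Rightarrow> (nat \<Rightarrow> real) \<Rightarrow> (nat \<Rightarrow> real)" where
  "phi_inv d x = (\<lambda>k. if k < d - 1 then x (k + 1) else 0)"

definition sym_edge_polytope :: "nat \<Rightarrow> nat set set \<Rightarrow> (nat \<Rightarrow> real) set" where
  "sym_edge_polytope d E = conv {phi_inv d (\<lambda>k. s * sigma i j k) | s i j.
       s \<in> {1, -1} \<and> {i, j} \<in> E}"

end

theory Submission imports Defs "HOL-Library.Function_Algebras" begin

instantiation "fun" :: (type, real_vector) real_vector
begin
definition scaleR_fun :: "real \<Rightarrow> ('a \<Rightarrow> 'b) \<Rightarrow> 'a \<Rightarrow> 'b" where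
  "scaleR_fun r f = (\<lambda>x. r *\<^sub>R f x)"
instance by standard (auto simp: scaleR_fun_def fun_eq_iff algebra_simps)
end

lemma scaleR_fun_apply [simp]: "(r *\<^sub>R f) x = r *\<^sub>R f x"
  by (simp add: scaleR_fun_def)

lemma sum_fun_apply: "(\<Sum>v\<in>F. f v) x = (\<Sum>v\<in>F. f v x)"
  by (induction F rule: infinite_finite_induct) auto

lemma sumR_apply: "(\<Sum>v\<in>F. c v *\<^sub>R v) k = (\<Sum>v\<in>F. c v * (v::nat\<Rightarrow>real) k)"
  by (simp add: sum_fun_apply)

lemma conv_eq: "conv S = convex hull S"
proof (rule set_eqI)
  fix x
  show "x \<in> conv S \<longleftrightarrow> x \<in> convex hull S"
  proof
    assume "x \<in> conv S"
    then obtain F c where F: "finite F" "F \<subseteq> S" "\<forall>v\<in>F. c v \<ge> 0" "sum c F = 1"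
      "x = (\<lambda>k. \<Sum>v\<in>F. c v * v k)" unfolding conv_def by blast
    have "x = (\<Sum>v\<in>F. c v *\<^sub>R v)" using F(5) by (simp add: fun_eq_iff sumR_apply)
    then show "x \<in> convex hull S" unfolding convex_hull_explicit using F by blast
  next
    assume "x \<in> convex hull S"
    then obtain F c where F: "finite F" "F \<subseteq> S" "\<forall>v\<in>F. c v \<ge> 0" "sum c F = 1"
      "x = (\<Sum>v\<in>F. c v *\<^sub>R v)" unfolding convex_hull_explicit by blast
    have "F \<noteq> {}" using F(4) by auto
    moreover have "x = (\<lambda>k. \<Sum>v\<in>F. c v * v k)" using F(5) by (simp add: fun_eq_iff sumR_apply)
    ultimately show "x \<in> conv S" unfolding conv_def using F by blast
  qed
qed

lemma aff_eq: "aff_hull S = affine hull S"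
proof (rule set_eqI)
  fix x
  show "x \<in> aff_hull S \<longleftrightarrow> x \<in> affine hull S"
  proof
    assume "x \<in> aff_hull S"
    then obtain F c where F: "finite F" "F \<subseteq> S" "F \<noteq> {}" "sum c F = 1"
      "x = (\<lambda>k. \<Sum>v\<in>F. c v * v k)" unfolding aff_hull_def by blast
    have "x = (\<Sum>v\<in>F. c v *\<^sub>R v)" using F(5) by (simp add: fun_eq_iff sumR_apply)
    then show "x \<in> affine hull S" unfolding affine_hull_explicit using F by blast
  next
    assume "x \<in> affine hull S"
    then obtain F c where F: "finite F" "F \<subseteq> S" "F \<noteq> {}" "sum c F = 1"
      "x = (\<Sum>v\<in>F. c v *\<^sub>R v)" unfolding affine_hull_explicit by blast
    have "x = (\<lambda>k. \<Sum>v\<in>F. c v * v k)" using F(5) by (simp add: fun_eq_iff sumR_apply)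
    then show "x \<in> aff_hull S" unfolding aff_hull_def using F by blast
  qed
qed


definition Th :: "(nat \<Rightarrow> nat) \<Rightarrow> nat \<Rightarrow> (nat \<Rightarrow> real) \<Rightarrow> (nat \<Rightarrow> real)" where
  "Th h n x = (\<lambda>k. if k < n then x (h k) else 0)"
definition eps :: "(nat \<Rightarrow> nat) \<Rightarrow> nat \<Rightarrow> nat \<Rightarrow> (nat \<Rightarrow> real)" where
  "eps h n u = (\<lambda>k. if k < n \<and> h k = u then 1 else 0)"
definition gens_on :: "nat set set \<Rightarrow> nat set \<Rightarrow> (nat\<Rightarrow>real) set" where
  "gens_on E S = {\<lambda>k. s * Defs.sigma i j k | s i j. s \<in> {1,-1} \<and> {i,j} \<in> E \<and> i \<in> S \<and> j \<in> S}"
definition Rel :: "nat set \<Rightarrow> nat set set \<Rightarrow> nat \<Rightarrow> nat \<Rightarrow> bool" where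
  "Rel S E = (\<lambda>a b. a \<in> S \<and> b \<in> S \<and> {a,b} \<in> E)"
definition ek :: "nat \<Rightarrow> (nat \<Rightarrow> real)" where
  "ek k = (\<lambda>j. if j = k then 1 else 0)"

lemma Th_gen: "Th h n (\<lambda>k. s * Defs.sigma i j k) = s *\<^sub>R (eps h n i - eps h n j)"
  by (auto simp: fun_eq_iff Th_def eps_def sigma_def)

lemma Rn_subspace: "subspace (Rn D)"
  unfolding subspace_def Rn_def by auto

lemma Rn_convex: "convex (Rn D)"
  by (rule subspace_imp_convex[OF Rn_subspace])

lemma Ints_pos_ge1: "(x::real) \<in> \<int> \<Longrightarrow> x > 0 \<Longrightarrow> x \<ge> 1"
  using Ints_nonzero_abs_ge1[of x] by auto

lemma convex_sum_le1:
  fixes S :: "'a::real_vector set"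
  assumes "convex S" "0 \<in> S" "finite I" "\<And>i. i \<in> I \<Longrightarrow> w i \<ge> 0" "sum w I \<le> 1"
    "\<And>i. i \<in> I \<Longrightarrow> q i \<in> S"
  shows "(\<Sum>i\<in>I. w i *\<^sub>R q i) \<in> S"
proof (cases "sum w I = 0")
  case True
  then have "\<forall>i\<in>I. w i = 0" using sum_nonneg_eq_0_iff[OF assms(3)] assms(4) by blast
  then show ?thesis using assms(2) by simp
next
  case False
  define s where "s = sum w I"
  have s0: "s > 0" using False assms(4) s_def sum_nonneg[of I w] by force
  have z: "(\<Sum>i\<in>I. (w i / s) *\<^sub>R q i) \<in> S"
    apply (rule convex_sum[OF assms(3,1)])
    using s0 assms by (auto simp: s_def sum_divide_distrib[symmetric])
  have "(\<Sum>i\<in>I. w i *\<^sub>R q i) = s *\<^sub>R (\<Sum>i\<in>I. (w i / s) *\<^sub>R q i) + (1 - s) *\<^sub>R 0"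
    using s0 by (simp add: scaleR_sum_right)
  also have "\<dots> \<in> S" apply (rule convexD[OF assms(1) z assms(2)]) using s0 assms(5) s_def by auto
  finally show ?thesis .
qed

lemma tree_fano:
  assumes n1: "n \<ge> 1" and bij: "bij_betw h {..<n} X" and rX: "r \<notin> X"
    and conn: "\<forall>u\<in>X. (Rel (insert r X) E)\<^sup>*\<^sup>* r u"
  shows "fano n (conv (Th h n ` gens_on E (insert r X)))"
proof -
  define G where "G = Th h n ` gens_on E (insert r X)"
  define P where "P = convex hull G"
  have Pc: "conv G = P" by (simp add: P_def conv_eq)
  have genform: "g \<in> G \<longleftrightarrow> (\<exists>s i j. s\<in>{1,-1} \<and> {i,j}\<in>E \<and> i \<in> insert r X \<and> j \<in> insert r X
      \<and> g = s *\<^sub>R (eps h n i - eps h n j))" for g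
  proof
    assume "g \<in> G"
    then obtain x where x: "x \<in> gens_on E (insert r X)" "g = Th h n x" unfolding G_def by blast
    then obtain s i j where "s\<in>{1,-1}" "{i,j}\<in>E" "i\<in>insert r X" "j \<in> insert r X"
        "x = (\<lambda>k. s * Defs.sigma i j k)" unfolding gens_on_def by blast
    then show "\<exists>s i j. s\<in>{1,-1} \<and> {i,j}\<in>E \<and> i \<in> insert r X \<and> j \<in> insert r X
      \<and> g = s *\<^sub>R (eps h n i - eps h n j)"
      using x(2) by (intro exI[of _ s] exI[of _ i] exI[of _ j]) (simp add: Th_gen)
  next
    assume "\<exists>s i j. s\<in>{1,-1} \<and> {i,j}\<in>E \<and> i \<in> insert r X \<and> j \<in> insert r X
      \<and> g = s *\<^sub>R (eps h n i - eps h n j)"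
    then obtain s i j where sij: "s\<in>{1,-1}" "{i,j}\<in>E" "i\<in>insert r X" "j \<in> insert r X"
        "g = s *\<^sub>R (eps h n i - eps h n j)" by blast
    then have "(\<lambda>k. s * Defs.sigma i j k) \<in> gens_on E (insert r X)" unfolding gens_on_def by blast
    moreover have "g = Th h n (\<lambda>k. s * Defs.sigma i j k)" using sij(5) by (simp add: Th_gen)
    ultimately show "g \<in> G" unfolding G_def by blast
  qed
  have edge_gen: "eps h n b - eps h n a \<in> G" if "Rel (insert r X) E a b" for a b
  proof -
    have "{b,a} \<in> E" "a \<in> insert r X" "b \<in> insert r X" using that by (auto simp: Rel_def insert_commute)
    then show ?thesis unfolding genform by (intro exI[of _ 1] exI[of _ b] exI[of _ a]) auto
  qed
  have edge_gen2: "eps h n a - eps h n b \<in> G" if "Rel (insert r X) E a b" for a b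
  proof -
    have "{a,b} \<in> E" "a \<in> insert r X" "b \<in> insert r X" using that by (auto simp: Rel_def)
    then show ?thesis unfolding genform by (intro exI[of _ 1] exI[of _ a] exI[of _ b]) auto
  qed
  have hX: "h k \<in> X" if "k < n" for k using bij that by (auto simp: bij_betw_def)
  have hinj: "h k = h k' \<longleftrightarrow> k = k'" if "k < n" "k' < n" for k k'
    using bij that by (auto simp: bij_betw_def inj_on_def)
  have eps_r: "eps h n r = 0" using hX rX by (auto simp: eps_def fun_eq_iff)
  have eps_ek: "eps h n (h k) = ek k" if "k < n" for k
    using hinj that by (auto simp: eps_def ek_def fun_eq_iff)
  have finX: "finite X" using bij bij_betw_finite by blast
  have GZ: "G \<subseteq> Zn n"
  proof
    fix g assume "g \<in> G"
    then obtain s i j where s: "s \<in> {1,-1}" and g: "g = s *\<^sub>R (eps h n i - eps h n j)"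
      unfolding genform by blast
    have "g k \<in> \<int>" for k using s unfolding g eps_def by auto
    moreover have "g k = 0" if "k \<ge> n" for k using that unfolding g eps_def by auto
    ultimately show "g \<in> Zn n" by (auto simp: Zn_def Rn_def)
  qed
  have finG: "finite G"
  proof -
    have "G \<subseteq> (\<lambda>(s,i,j). s *\<^sub>R (eps h n i - eps h n j)) ` ({1,-1} \<times> insert r X \<times> insert r X)"
    proof
      fix g assume "g \<in> G"
      then obtain s i j where "s\<in>{1,-1}" "i \<in> insert r X" "j \<in> insert r X"
        "g = s *\<^sub>R (eps h n i - eps h n j)" unfolding genform by blast
      then show "g \<in> (\<lambda>(s,i,j). s *\<^sub>R (eps h n i - eps h n j)) ` ({1,-1} \<times> insert r X \<times> insert r X)"
        by (intro image_eqI[of _ _ "(s,i,j)"]) auto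
    qed
    moreover have "finite ({1::real,-1} \<times> insert r X \<times> insert r X)" using finX by auto
    ultimately show ?thesis using finite_surj by blast
  qed
  have cP: "convex P" unfolding P_def by simp
  have GP: "G \<subseteq> P" unfolding P_def by (rule hull_subset)
  have PRn: "P \<subseteq> Rn n" unfolding P_def
    apply (rule hull_minimal) using GZ Rn_convex by (auto simp: Zn_def)
  have reach: "u = r \<or> (\<exists>t>0. t *\<^sub>R eps h n u \<in> P \<and> (-t) *\<^sub>R eps h n u \<in> P)"
    if "(Rel (insert r X) E)\<^sup>*\<^sup>* r u" for u
    using that
  proof (induction rule: rtranclp_induct)
    case base then show ?case by simp
  next
    case (step a b)
    have g1: "eps h n b - eps h n a \<in> P" and g2: "eps h n a - eps h n b \<in> P"
      using edge_gen[OF step(2)] edge_gen2[OF step(2)] GP by auto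
    from step(3) show ?case
    proof
      assume "a = r"
      then have e1: "(1::real) *\<^sub>R eps h n b = eps h n b - eps h n a"
        and e2: "(-1::real) *\<^sub>R eps h n b = eps h n a - eps h n b" using eps_r by (simp_all add: fun_eq_iff)
      show ?thesis apply (rule disjI2, rule exI[of _ 1]) unfolding e1 e2 apply (intro conjI) apply simp apply (rule g1) apply (rule g2) done
    next
      assume "\<exists>t>0. t *\<^sub>R eps h n a \<in> P \<and> (-t) *\<^sub>R eps h n a \<in> P"
      then obtain t where t: "t > 0" "t *\<^sub>R eps h n a \<in> P" "(-t) *\<^sub>R eps h n a \<in> P" by blast
      have e1: "(t/(1+t)) *\<^sub>R eps h n b = (1/(1+t)) *\<^sub>R (t *\<^sub>R eps h n a) + (t/(1+t)) *\<^sub>R (eps h n b - eps h n a)"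
        using t(1) by (simp add: fun_eq_iff field_simps)
      have e2: "(-(t/(1+t))) *\<^sub>R eps h n b = (1/(1+t)) *\<^sub>R ((-t) *\<^sub>R eps h n a) + (t/(1+t)) *\<^sub>R (eps h n a - eps h n b)"
        using t(1) by (simp add: fun_eq_iff field_simps)
      have "(t/(1+t)) *\<^sub>R eps h n b \<in> P" unfolding e1
        apply (rule convexD[OF cP t(2) g1]) using t(1) by (auto simp: field_simps)
      moreover have "(-(t/(1+t))) *\<^sub>R eps h n b \<in> P" unfolding e2
        apply (rule convexD[OF cP t(3) g2]) using t(1) by (auto simp: field_simps)
      moreover have "t/(1+t) > 0" using t(1) by simp
      ultimately show ?thesis by blast
    qed
  qed
  have tk: "\<exists>t>0. t *\<^sub>R ek k \<in> P \<and> (-t) *\<^sub>R ek k \<in> P" if "k < n" for k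
  proof -
    have "h k \<noteq> r" using hX[OF that] rX by auto
    then show ?thesis using reach[of "h k"] conn hX[OF that] eps_ek[OF that] by auto
  qed
  have zeroP: "0 \<in> P"
  proof -
    obtain t where t: "t *\<^sub>R ek 0 \<in> P" "(-t) *\<^sub>R ek 0 \<in> P" using tk[of 0] n1 by auto
    have "(1/2::real) *\<^sub>R (t *\<^sub>R ek 0) + (1/2::real) *\<^sub>R ((-t) *\<^sub>R ek 0) = 0"
      by (simp add: fun_eq_iff)
    moreover have "(1/2::real) *\<^sub>R (t *\<^sub>R ek 0) + (1/2::real) *\<^sub>R ((-t) *\<^sub>R ek 0) \<in> P"
      by (rule convexD[OF cP t]) auto
    ultimately show ?thesis by simp
  qed
  have "\<forall>k. \<exists>tt. k < n \<longrightarrow> (tt > 0 \<and> tt *\<^sub>R ek k \<in> P \<and> (-tt) *\<^sub>R ek k \<in> P)" using tk by blast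
  then obtain t where t: "\<And>k. k < n \<Longrightarrow> t k > 0 \<and> t k *\<^sub>R ek k \<in> P \<and> (- t k) *\<^sub>R ek k \<in> P"
    using choice[of "\<lambda>k tt. k < n \<longrightarrow> (tt > 0 \<and> tt *\<^sub>R ek k \<in> P \<and> (-tt) *\<^sub>R ek k \<in> P)"] by blast
  have ek_sum: "(\<Sum>k<n. c k * ek k j) = (if j < n then c j else 0)" for c j
    by (simp add: ek_def if_distrib cong: if_cong)
  have tpos: "t k > 0" if "k < n" for k using t[OF that] by blast
  define S where "S = (\<Sum>k<n. 1 / t k)"
  have S0: "S \<ge> 0" unfolding S_def by (intro sum_nonneg) (simp add: tpos less_imp_le)
  define \<delta> where "\<delta> = 1 / (1 + S)"
  have dpos: "\<delta> > 0" using S0 by (simp add: \<delta>_def)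
  have intP: "y \<in> P" if y: "y \<in> Rn n" "\<forall>k<n. \<bar>y k\<bar> < \<delta>" for y
  proof -
    define w where "w k = \<bar>y k\<bar> / t k" for k
    define c where "c k = (if y k \<ge> 0 then t k else - t k)" for k
    define q where "q k = c k *\<^sub>R ek k" for k
    have qP: "q k \<in> P" if "k < n" for k using t[OF that] by (simp add: q_def c_def)
    have w0: "w k \<ge> 0" if "k < n" for k using tpos[OF that] by (simp add: w_def)
    have "sum w {..<n} \<le> (\<Sum>k<n. \<delta> / t k)"
      apply (rule sum_mono) unfolding w_def using y(2) tpos
      by (simp add: divide_right_mono less_imp_le)
    also have "\<dots> = \<delta> * S" by (simp add: S_def sum_distrib_left)
    also have "\<dots> \<le> 1" using S0 by (simp add: \<delta>_def)
    finally have wsum: "sum w {..<n} \<le> 1" .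
    have yeq: "y = (\<Sum>k<n. w k *\<^sub>R q k)"
    proof (rule ext)
      fix j
      have "(\<Sum>k<n. w k *\<^sub>R q k) j = (\<Sum>k<n. (w k * c k) * ek k j)"
        by (simp add: sum_fun_apply q_def mult.assoc)
      also have "\<dots> = (if j < n then w j * c j else 0)" by (rule ek_sum)
      also have "\<dots> = y j"
      proof (cases "j < n")
        case True then show ?thesis using tpos[OF True] by (simp add: w_def c_def)
      next
        case False then show ?thesis using y(1) by (simp add: Rn_def)
      qed
      finally show "y j = (\<Sum>k<n. w k *\<^sub>R q k) j" by simp
    qed
    show ?thesis unfolding yeq
      by (rule convex_sum_le1[OF cP zeroP]) (use w0 wsum qP in auto)
  qed
  have zero_int: "(\<lambda>_. 0) \<in> interior_in n P"
    unfolding interior_in_def using dpos intP by (auto simp: Rn_def)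
  have latt: "y = (\<lambda>_. 0)" if y: "y \<in> Zn n" "y \<in> interior_in n P" for y
  proof (rule ccontr)
    assume yne: "y \<noteq> (\<lambda>_. 0)"
    have yRn: "y \<in> Rn n" using y by (simp add: Zn_def)
    obtain k0 where k0: "k0 < n" "y k0 \<noteq> 0"
    proof -
      have "\<exists>k. y k \<noteq> 0" using yne by auto
      then obtain k where yk: "y k \<noteq> 0" by blast
      have "k < n"
      proof (rule ccontr)
        assume "\<not> k < n"
        then have "y k = 0" using yRn by (simp add: Rn_def)
        then show False using yk by simp
      qed
      then show ?thesis using that yk by blast
    qed
    define sg where "sg = (if y k0 > 0 then 1 else -1::real)"
    have sg2: "sg * sg = 1" by (simp add: sg_def)
    define K where "K = {k. k < n \<and> sg * y k > 0}"
    define f where "f z = sg * (\<Sum>k\<in>K. z k)" for z :: "nat \<Rightarrow> real"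
    have finK: "finite K" by (simp add: K_def)
    have k0K: "k0 \<in> K" using k0 by (auto simp: K_def sg_def)
    have Kn: "K \<subseteq> {..<n}" by (auto simp: K_def)
    have epsK: "0 \<le> (\<Sum>k\<in>K. eps h n u k) \<and> (\<Sum>k\<in>K. eps h n u k) \<le> 1" for u
    proof (cases "\<exists>k1\<in>K. h k1 = u")
      case True
      then obtain k1 where k1: "k1 \<in> K" "h k1 = u" by blast
      have "\<And>k. k \<in> K \<Longrightarrow> eps h n u k = (if k = k1 then 1 else 0)"
      proof -
        fix k assume kK: "k \<in> K"
        then have kn: "k < n" using Kn by auto
        have "h k = u \<longleftrightarrow> k = k1" using hinj[OF kn] k1 Kn by auto
        then show "eps h n u k = (if k = k1 then 1 else 0)" using kn by (simp add: eps_def)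
      qed
      then have "(\<Sum>k\<in>K. eps h n u k) = (\<Sum>k\<in>K. if k = k1 then 1 else 0)" by (rule sum.cong[OF refl])
      also have "\<dots> = 1" using k1 finK by simp
      finally show ?thesis by simp
    next
      case False
      then have "\<And>k. k \<in> K \<Longrightarrow> eps h n u k = 0" by (auto simp: eps_def)
      then show ?thesis by simp
    qed
    have fG: "f g \<le> 1" if "g \<in> G" for g
    proof -
      have "\<exists>s i j. s\<in>{1,-1} \<and> {i,j}\<in>E \<and> i \<in> insert r X \<and> j \<in> insert r X
      \<and> g = s *\<^sub>R (eps h n i - eps h n j)" using that genform by blast
      then obtain s i j where s: "s \<in> {1,-1}" and g: "g = s *\<^sub>R (eps h n i - eps h n j)"
        by blast
      define A where "A = (\<Sum>k\<in>K. eps h n i k)"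
      define B where "B = (\<Sum>k\<in>K. eps h n j k)"
      have gk: "g k = s * eps h n i k - s * eps h n j k" for k by (simp add: g right_diff_distrib)
      have "(\<Sum>k\<in>K. g k) = (\<Sum>k\<in>K. s * eps h n i k) - (\<Sum>k\<in>K. s * eps h n j k)"
        unfolding gk by (rule sum_subtractf)
      also have "\<dots> = s * A - s * B" by (simp only: A_def B_def sum_distrib_left)
      finally have fg: "f g = sg * (s * A - s * B)" by (simp add: f_def)
      have AB: "0 \<le> A" "A \<le> 1" "0 \<le> B" "B \<le> 1" using epsK[of i] epsK[of j] by (simp_all add: A_def B_def)
      have "sg = 1 \<or> sg = -1" by (simp add: sg_def)
      then show ?thesis using s AB unfolding fg by auto
    qed
    have Hconv: "convex {z. f z \<le> 1}"
    proof (rule convexI)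
      fix x z :: "nat \<Rightarrow> real" and u v :: real
      assume "x \<in> {z. f z \<le> 1}" "z \<in> {z. f z \<le> 1}" "0 \<le> u" "0 \<le> v" "u + v = 1"
      moreover have "f (u *\<^sub>R x + v *\<^sub>R z) = u * f x + v * f z"
        by (simp add: f_def sum.distrib sum_distrib_left algebra_simps)
      moreover have "u * f x \<le> u" "v * f z \<le> v" using calculation
        by (simp_all add: mult_left_le)
      ultimately show "u *\<^sub>R x + v *\<^sub>R z \<in> {z. f z \<le> 1}" by simp
    qed
    have fP: "P \<subseteq> {z. f z \<le> 1}" unfolding P_def
      by (rule hull_minimal) (use fG Hconv in auto)
    have yint: "sg * y k0 \<in> \<int>" using y(1) k0 by (auto simp: Zn_def sg_def)
    have "1 \<le> sg * y k0" using Ints_pos_ge1[OF yint] k0K by (simp add: K_def)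
    also have "\<dots> \<le> (\<Sum>k\<in>K. sg * y k)"
      by (rule member_le_sum[OF k0K _ finK]) (auto simp: K_def)
    finally have fy: "f y \<ge> 1" by (simp add: f_def sum_distrib_left)
    obtain e where e: "e > 0" "\<forall>z\<in>Rn n. (\<forall>k<n. \<bar>z k - y k\<bar> < e) \<longrightarrow> z \<in> P"
      using y(2) unfolding interior_in_def by blast
    define z where "z = y + (sg * e / 2) *\<^sub>R ek k0"
    have zRn: "z \<in> Rn n" using yRn k0 by (auto simp: Rn_def z_def ek_def)
    have "\<bar>z k - y k\<bar> < e" for k using e(1) by (auto simp: z_def ek_def sg_def)
    then have "z \<in> P" using e(2) zRn by blast
    then have "f z \<le> 1" using fP by auto
    moreover have "f z = f y + e / 2"
    proof -
      have "f z = f y + sg * (\<Sum>k\<in>K. (sg * e / 2) * ek k0 k)"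
        by (simp add: f_def z_def sum.distrib algebra_simps)
      also have "(\<Sum>k\<in>K. (sg * e / 2) * ek k0 k) = (sg * e / 2) * (\<Sum>k\<in>K. ek k0 k)"
        by (simp only: sum_distrib_left)
      also have "(\<Sum>k\<in>K. ek k0 k) = 1"
        using k0K finK by (simp add: ek_def)
      finally show ?thesis using sg2 by (simp add: algebra_simps)
    qed
    ultimately show False using fy e(1) by simp
  qed
  have fd: "affine hull P = Rn n"
  proof
    show "affine hull P \<subseteq> Rn n" by (rule hull_minimal[where S=affine, OF PRn subspace_imp_affine[OF Rn_subspace[of n]]])
    have ah: "affine hull P = span P" by (rule affine_hull_span_0) (rule hull_inc[OF zeroP])
    show "Rn n \<subseteq> affine hull P"
    proof
      fix y assume y: "y \<in> Rn n"
      have ekspan: "ek k \<in> span P" if "k < n" for k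
      proof -
        have "(1 / t k) *\<^sub>R (t k *\<^sub>R ek k) \<in> span P"
          using t[OF that] by (intro span_scale span_base) auto
        then show ?thesis using tpos[OF that] by simp
      qed
      have "y = (\<Sum>k<n. y k *\<^sub>R ek k)"
      proof (rule ext)
        fix j
        have "(\<Sum>k<n. y k *\<^sub>R ek k) j = (\<Sum>k<n. y k * ek k j)" by (simp add: sum_fun_apply)
        also have "\<dots> = (if j < n then y j else 0)" by (rule ek_sum)
        also have "\<dots> = y j" using y by (auto simp: Rn_def)
        finally show "y j = (\<Sum>k<n. y k *\<^sub>R ek k) j" by simp
      qed
      also have "\<dots> \<in> span P" by (intro span_sum span_scale ekspan) auto
      finally show "y \<in> affine hull P" using ah by simp
    qed
  qed
  have "fano n P"
    unfolding fano_def integral_polytope_def full_dimensional_def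
  proof (intro conjI)
    show "\<exists>V. finite V \<and> V \<subseteq> Zn n \<and> P = conv V" using finG GZ Pc by blast
    show "aff_hull P = Rn n" using fd by (simp add: aff_eq)
    show "Zn n \<inter> interior_in n P = {\<lambda>_. 0}"
      using latt zero_int by (auto simp: Zn_def Rn_def)
  qed
  then show ?thesis using Pc G_def by simp
qed


lemma lin_map_linear: "linear (lin_map D U)"
proof (rule linearI)
  fix b1 b2 :: "nat \<Rightarrow> real"
  show "lin_map D U (b1 + b2) = lin_map D U b1 + lin_map D U b2"
    by (simp add: lin_map_def fun_eq_iff distrib_left sum.distrib)
next
  fix r :: real and b :: "nat \<Rightarrow> real"
  show "lin_map D U (r *\<^sub>R b) = r *\<^sub>R lin_map D U b"
    by (simp add: lin_map_def fun_eq_iff sum_distrib_left mult.left_commute)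
qed

lemma phi_inv_linear: "linear (phi_inv d)"
  by (rule linearI) (auto simp: phi_inv_def fun_eq_iff)

lemma shift_linear: "linear (shift_by D1)"
  by (rule linearI) (auto simp: shift_by_def fun_eq_iff)

lemma lin_map_Rn: "lin_map D U x \<in> Rn D"
  by (simp add: lin_map_def Rn_def)

lemma phi_inv_Rn: "phi_inv d x \<in> Rn (d - 1)"
  by (simp add: phi_inv_def Rn_def)

lemma lin_inv_apply:
  assumes W: "\<forall>i<D. \<forall>j<D. (\<Sum>k<D. W i k * U k j) = (if i = j then 1 else 0)"
    and y: "y \<in> Rn D" and j: "j < D"
  shows "(\<Sum>i<D. of_int (W j i) * lin_map D U y i) = y j"
proof -
  have s1: "of_int (W j i) * lin_map D U y i = (\<Sum>k<D. of_int (W j i) * (of_int (U i k) * y k))"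
    if "i < D" for i using that by (simp add: lin_map_def sum_distrib_left)
  have s3: "of_int (\<Sum>i<D. W j i * U i k) * y k = (\<Sum>i<D. of_int (W j i) * (of_int (U i k) * y k))"
    for k by (simp add: sum_distrib_right mult.assoc)
  have "(\<Sum>i<D. of_int (W j i) * lin_map D U y i) = (\<Sum>i<D. \<Sum>k<D. of_int (W j i) * (of_int (U i k) * y k))"
    by (rule sum.cong[OF refl], rule s1, simp)
  also have "\<dots> = (\<Sum>k<D. \<Sum>i<D. of_int (W j i) * (of_int (U i k) * y k))" by (rule sum.swap)
  also have "\<dots> = (\<Sum>k<D. of_int (\<Sum>i<D. W j i * U i k) * y k)"
    by (rule sum.cong[OF refl], rule s3[symmetric])
  also have "\<dots> = (\<Sum>k<D. (if j = k then y k else 0))"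
  proof (intro sum.cong refl)
    fix k assume "k \<in> {..<D}"
    then have "(\<Sum>i<D. W j i * U i k) = (if j = k then 1 else 0)" using W j by auto
    then show "of_int (\<Sum>i<D. W j i * U i k) * y k = (if j = k then y k else 0)" by simp
  qed
  also have "\<dots> = y j" using j by simp
  finally show ?thesis .
qed

lemma lin_inj0:
  assumes "unimodular D U" "y \<in> Rn D" "lin_map D U y = 0"
  shows "y = 0"
proof (rule ext)
  fix j
  obtain W where W: "\<forall>i<D. \<forall>j<D. (\<Sum>k<D. W i k * U k j) = (if i = j then 1 else 0)"
    using assms(1) unfolding unimodular_def by blast
  show "y j = 0 j"
  proof (cases "j < D")
    case True
    then show ?thesis using lin_inv_apply[OF W assms(2) True] assms(3) by simp
  next
    case False then show ?thesis using assms(2) by (simp add: Rn_def)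
  qed
qed

lemma lin_inj:
  assumes "unimodular D U" "y \<in> Rn D" "z \<in> Rn D" "lin_map D U y = lin_map D U z"
  shows "y = z"
proof -
  have "lin_map D U (y - z) = 0" using assms(4) linear_diff[OF lin_map_linear] by simp
  moreover have "y - z \<in> Rn D" using assms(2,3) subspace_diff[OF Rn_subspace] by blast
  ultimately have "y - z = 0" using lin_inj0 assms(1) by blast
  then show ?thesis by simp
qed

lemma fano_sub: "fano D P \<Longrightarrow> P \<subseteq> Rn D"
proof -
  assume "fano D P"
  then obtain V where V: "V \<subseteq> Zn D" "P = convex hull V"
    unfolding fano_def integral_polytope_def conv_eq by blast
  have "V \<subseteq> Rn D" using V(1) by (auto simp: Zn_def)
  then show ?thesis unfolding V(2) by (rule hull_minimal[where S=convex, OF _ Rn_convex])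
qed

lemma fano_zero: "fano D P \<Longrightarrow> (\<lambda>_. 0) \<in> P"
proof -
  assume f: "fano D P"
  then have "(\<lambda>_. 0) \<in> interior_in D P" unfolding fano_def by blast
  then obtain e where "e > 0" "\<forall>y\<in>Rn D. (\<forall>k<D. \<bar>y k - 0\<bar> < e) \<longrightarrow> y \<in> P"
    unfolding interior_in_def by auto
  moreover have "(\<lambda>_. 0) \<in> Rn D" by (simp add: Rn_def)
  ultimately show ?thesis by auto
qed

lemma fano_box: "fano D P \<Longrightarrow> D \<ge> 1 \<Longrightarrow> \<exists>e>0. (\<lambda>k. if k = 0 then e else 0) \<in> P"
proof -
  assume f: "fano D P" and D: "D \<ge> 1"
  then have "(\<lambda>_. 0) \<in> interior_in D P" unfolding fano_def by blast
  then obtain e where e: "e > 0" "\<forall>y\<in>Rn D. (\<forall>k<D. \<bar>y k - 0\<bar> < e) \<longrightarrow> y \<in> P"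
    unfolding interior_in_def by auto
  have "(\<lambda>k. if k = 0 then e/2 else 0) \<in> Rn D" using D by (simp add: Rn_def)
  then have "(\<lambda>k. if k = 0 then e/2 else 0) \<in> P" using e by auto
  then show ?thesis using e(1) by (intro exI[of _ "e/2"]) auto
qed

definition liftv :: "nat \<Rightarrow> (nat \<Rightarrow> real) \<Rightarrow> (nat \<Rightarrow> real)" where
  "liftv d y = (\<lambda>m. if 1 \<le> m \<and> m < d then y (m - 1) else if m = d then - (\<Sum>k<d-1. y k) else 0)"

lemma liftv_linear: "linear (liftv d)"
proof (rule linearI)
  fix b1 b2 :: "nat \<Rightarrow> real"
  show "liftv d (b1 + b2) = liftv d b1 + liftv d b2"
    by (simp add: liftv_def fun_eq_iff sum.distrib)
next
  fix r :: real and b :: "nat \<Rightarrow> real"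
  show "liftv d (r *\<^sub>R b) = r *\<^sub>R liftv d b"
    by (simp add: liftv_def fun_eq_iff sum_distrib_left)
qed

lemma sum_shift1: "(\<Sum>k<d-1. (x::nat\<Rightarrow>real) (k+1)) = (\<Sum>m\<in>{1..<d}. x m)"
proof -
  have "(\<Sum>m\<in>{1..<d}. x m) = (\<Sum>k\<in>{0..<d-1}. x (Suc k))"
    by (cases d) (simp_all add: sum.shift_bounds_Suc_ivl[symmetric])
  then show ?thesis by (simp add: atLeast0LessThan)
qed

lemma sum_1d: "(d::nat) \<ge> 1 \<Longrightarrow> (\<Sum>m\<in>{1..d}. (x m :: real)) = (\<Sum>m\<in>{1..<d}. x m) + x d"
proof -
  assume d: "d \<ge> 1"
  have "{1..d} = insert d {1..<d}" using d by auto
  then show ?thesis by (simp add: add.commute)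
qed

lemma lift_phi:
  assumes d: "d \<ge> 2" and x: "(\<Sum>m\<in>{1..d}. x m) = 0" and m: "m \<in> {1..d}"
  shows "liftv d (phi_inv d x) m = x m"
proof (cases "m < d")
  case True
  then show ?thesis using m by (auto simp: liftv_def phi_inv_def)
next
  case False
  then have md: "m = d" using m by auto
  have "(\<Sum>k<d-1. phi_inv d x k) = (\<Sum>k<d-1. x (k+1))" by (simp add: phi_inv_def)
  also have "\<dots> = (\<Sum>m\<in>{1..<d}. x m)" by (rule sum_shift1)
  also have "\<dots> = - x d" using x sum_1d[of d x] d by simp
  finally show ?thesis using md d by (simp add: liftv_def)
qed

lemma sigma_sum0: "i \<in> {1..d} \<Longrightarrow> j \<in> {1..d} \<Longrightarrow> (\<Sum>m\<in>{1..d}. s * Defs.sigma i j m) = 0"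
proof -
  assume ij: "i \<in> {1..d}" "j \<in> {1..d}"
  have e: "\<And>u. u \<in> {1..d} \<Longrightarrow> (\<Sum>m\<in>{1..d}. (if m = u then s else 0)) = s" by simp
  have "(\<Sum>m\<in>{1..d}. s * Defs.sigma i j m) = (\<Sum>m\<in>{1..d}. (if m = i then s else 0) - (if m = j then s else 0))"
    by (rule sum.cong) (auto simp: sigma_def)
  also have "\<dots> = 0" using e[OF ij(1)] e[OF ij(2)] by (simp add: sum_subtractf)
  finally show ?thesis .
qed

lemma sym_eq:
  assumes "simple_graph d E"
  shows "sym_edge_polytope d E = conv (phi_inv d ` gens_on E {1..d})"
proof -
  have ij: "i \<in> {1..d} \<and> j \<in> {1..d}" if "{i,j} \<in> E" for i j
  proof -
    have "\<exists>a b. {i,j} = {a,b} \<and> a \<noteq> b \<and> a \<in> {1..d} \<and> b \<in> {1..d}"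
      by (rule bspec[OF assms[unfolded simple_graph_def] that])
    then obtain a b where eq: "{i,j} = {a,b}" and ab: "a \<in> {1..d}" "b \<in> {1..d}" by blast
    have "i \<in> {a,b}" "j \<in> {a,b}" unfolding eq[symmetric] by simp_all
    then show ?thesis using ab by auto
  qed
  have "{phi_inv d (\<lambda>k. s * Defs.sigma i j k) | s i j. s \<in> {1, -1} \<and> {i, j} \<in> E}
      = phi_inv d ` gens_on E {1..d}"
    (is "?A = ?B")
  proof
    show "?A \<subseteq> ?B"
    proof
      fix x assume "x \<in> ?A"
      then obtain s i j where sij: "s\<in>{1,-1}" "{i,j}\<in>E" "x = phi_inv d (\<lambda>k. s * Defs.sigma i j k)" by blast
      have "(\<lambda>k. s * Defs.sigma i j k) \<in> gens_on E {1..d}"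
        using ij[OF sij(2)] sij unfolding gens_on_def by blast
      then show "x \<in> ?B" using sij(3) by blast
    qed
  next
    show "?B \<subseteq> ?A"
    proof
      fix x assume "x \<in> ?B"
      then obtain g where g: "g \<in> gens_on E {1..d}" "x = phi_inv d g" by blast
      then obtain s i j where "s\<in>{1,-1}" "{i,j}\<in>E" "g = (\<lambda>k. s * Defs.sigma i j k)"
        unfolding gens_on_def by blast
      then show "x \<in> ?A" using g(2) by blast
    qed
  qed
  then show ?thesis unfolding sym_edge_polytope_def by (rule arg_cong[where f=conv])
qed


lemma face_le:
  fixes phi :: "(nat \<Rightarrow> real) \<Rightarrow> real"
  assumes lin: "linear phi" and le: "\<forall>g\<in>S. phi g \<le> M" and q: "q \<in> convex hull S"
  shows "phi q \<le> M"
proof -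
  have "convex {z. phi z \<le> M}"
  proof (rule convexI)
    fix x y :: "nat \<Rightarrow> real" and u v :: real
    assume xy: "x \<in> {z. phi z \<le> M}" "y \<in> {z. phi z \<le> M}" and uv: "0 \<le> u" "0 \<le> v" "u + v = 1"
    have "phi (u *\<^sub>R x + v *\<^sub>R y) = u * phi x + v * phi y"
      by (simp add: linear_add[OF lin] linear_scale[OF lin])
    also have "\<dots> \<le> u * M + v * M" using xy uv by (intro add_mono mult_left_mono) auto
    also have "\<dots> = M" using uv by (simp add: distrib_right[symmetric])
    finally show "u *\<^sub>R x + v *\<^sub>R y \<in> {z. phi z \<le> M}" by simp
  qed
  then have "convex hull S \<subseteq> {z. phi z \<le> M}" using le by (intro hull_minimal) auto
  then show ?thesis using q by auto
qed

lemma face_eq: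
  fixes phi :: "(nat \<Rightarrow> real) \<Rightarrow> real"
  assumes lin: "linear phi" and le: "\<forall>g\<in>S. phi g \<le> M" and eq: "\<forall>g\<in>S. phi g = M \<longrightarrow> g = p"
    and q: "q \<in> convex hull S" and qM: "phi q \<ge> M"
  shows "q = p"
proof -
  obtain F c where F: "finite F" "F \<subseteq> S" "\<forall>x\<in>F. 0 \<le> c x" "sum c F = 1" "(\<Sum>v\<in>F. c v *\<^sub>R v) = q"
    using q unfolding convex_hull_explicit by blast
  have pq: "phi q = (\<Sum>v\<in>F. c v * phi v)"
    unfolding F(5)[symmetric] by (simp add: linear_sum[OF lin] linear_scale[OF lin])
  have t0: "\<forall>v\<in>F. c v * (M - phi v) \<ge> 0" using F(2,3) le by auto
  have "(\<Sum>v\<in>F. c v * (M - phi v)) = M * sum c F - (\<Sum>v\<in>F. c v * phi v)"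
    by (simp add: right_diff_distrib sum_subtractf sum_distrib_left mult.commute)
  also have "\<dots> = M - phi q" using F(4) pq by simp
  finally have "(\<Sum>v\<in>F. c v * (M - phi v)) \<le> 0" using qM by simp
  moreover have "(\<Sum>v\<in>F. c v * (M - phi v)) \<ge> 0" using t0 by (intro sum_nonneg) auto
  ultimately have "(\<Sum>v\<in>F. c v * (M - phi v)) = 0" by linarith
  moreover have "(\<Sum>v\<in>F. c v * (M - phi v)) = 0 \<longleftrightarrow> (\<forall>v\<in>F. c v * (M - phi v) = 0)"
    by (rule sum_nonneg_eq_0_iff[OF F(1)]) (use t0 in blast)
  ultimately have z: "\<forall>v\<in>F. c v * (M - phi v) = 0" by blast
  have "\<forall>v\<in>F. c v *\<^sub>R v = c v *\<^sub>R p"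
  proof
    fix v assume v: "v \<in> F"
    show "c v *\<^sub>R v = c v *\<^sub>R p"
    proof (cases "c v = 0")
      case False
      have "c v * (M - phi v) = 0" using z v by blast
      then have "phi v = M" using False by simp
      then have "v = p" using eq F(2) v by blast
      then show ?thesis by simp
    qed simp
  qed
  then have "(\<Sum>v\<in>F. c v *\<^sub>R v) = (\<Sum>v\<in>F. c v *\<^sub>R p)" by (intro sum.cong refl) blast
  then have "q = (\<Sum>v\<in>F. c v *\<^sub>R p)" using F(5) by simp
  also have "\<dots> = p" using F(4) by (simp add: scaleR_sum_left[symmetric])
  finally show ?thesis .
qed

lemma edge_props:
  assumes "simple_graph d E" "{i,j} \<in> E"
  shows "i \<in> {1..d} \<and> j \<in> {1..d} \<and> i \<noteq> j"
proof -
  have "\<exists>a b. {i,j} = {a,b} \<and> a \<noteq> b \<and> a \<in> {1..d} \<and> b \<in> {1..d}"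
    by (rule bspec[OF assms(1)[unfolded simple_graph_def] assms(2)])
  then obtain a b where eq: "{i,j} = {a,b}" and ab: "a \<noteq> b" "a \<in> {1..d}" "b \<in> {1..d}" by blast
  have "i \<in> {a,b}" "j \<in> {a,b}" unfolding eq[symmetric] by simp_all
  moreover have "i \<noteq> j"
  proof
    assume "i = j"
    then have "{a,b} = {i}" using eq by simp
    then show False using ab(1) by (metis insertI1 insert_commute singletonD)
  qed
  ultimately show ?thesis using ab by auto
qed

lemma sigma_neg: "Defs.sigma j i = - Defs.sigma i j"
  by (simp add: sigma_def fun_eq_iff)

lemma sigma_H: "i \<in> {1..d} \<Longrightarrow> j \<in> {1..d} \<Longrightarrow> (\<Sum>m\<in>{1..d}. Defs.sigma i j m) = 0"
  using sigma_sum0[of i d j 1] by simp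


lemma dir2:
  assumes d2: "d \<ge> 2" and sg: "simple_graph d E" and tc: "two_connected d E"
    and spl: "splits (d - 1) (sym_edge_polytope d E)"
  shows False
proof -
  obtain U D1 D2 P1 P2 where U: "unimodular (d-1) U" and D: "D1 \<ge> 1" "D2 \<ge> 1" "D1 + D2 = d - 1"
    and f1: "fano D1 P1" and f2: "fano D2 P2"
    and img: "lin_map (d-1) U ` sym_edge_polytope d E = conv (P1 \<union> shift_by D1 ` P2)"
    using spl unfolding splits_def by blast
  define D where "D = d - 1"
  define L where "L = lin_map D U"
  define V where "V = {1..d}"
  define Gs where "Gs = gens_on E V"
  define P where "P = convex hull (phi_inv d ` Gs)"
  define Q where "Q = convex hull (P1 \<union> shift_by D1 ` P2)"
  have Peq: "sym_edge_polytope d E = P" using sym_eq[OF sg] by (simp add: P_def Gs_def V_def conv_eq)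
  have LP: "L ` P = Q" using img Peq by (simp add: L_def D_def Q_def conv_eq)
  have linL: "linear L" unfolding L_def by (rule lin_map_linear)
  have linphi: "linear (phi_inv d)" by (rule phi_inv_linear)
  have UD: "unimodular D U" using U by (simp add: D_def)
  define Y1 where "Y1 = {y. \<forall>k\<ge>D1. L y k = 0}"
  define Y2 where "Y2 = {y. \<forall>k<D1. L y k = 0}"
  have Y1s: "subspace Y1" unfolding subspace_def Y1_def
    by (simp add: linear_0[OF linL] linear_add[OF linL] linear_scale[OF linL])
  have Y2s: "subspace Y2" unfolding subspace_def Y2_def
    by (simp add: linear_0[OF linL] linear_add[OF linL] linear_scale[OF linL])
  define W1 where "W1 = {x. phi_inv d x \<in> Y1}"
  define W2 where "W2 = {x. phi_inv d x \<in> Y2}"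
  have W1s: "subspace W1" unfolding W1_def using Y1s
    by (simp add: subspace_def linear_0[OF linphi] linear_add[OF linphi] linear_scale[OF linphi])
  have W2s: "subspace W2" unfolding W2_def using Y2s
    by (simp add: subspace_def linear_0[OF linphi] linear_add[OF linphi] linear_scale[OF linphi])
  define H where "H = {x::nat\<Rightarrow>real. (\<Sum>m\<in>V. x m) = 0}"
  have Hs: "subspace H" unfolding subspace_def H_def
    by (simp add: sum.distrib sum_distrib_left[symmetric])
  have inj: "x m = 0" if x: "x \<in> W1" "x \<in> W2" "x \<in> H" and m: "m \<in> V" for x m
  proof -
    have "L (phi_inv d x) = 0"
    proof (rule ext)
      fix k show "L (phi_inv d x) k = 0 k"
        using x(1,2) unfolding W1_def W2_def Y1_def Y2_def by (cases "k < D1") auto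
    qed
    moreover have "phi_inv d x \<in> Rn D" using phi_inv_Rn by (simp add: D_def)
    ultimately have "phi_inv d x = 0" using lin_inj0[OF UD] unfolding L_def by blast
    then have "liftv d (phi_inv d x) m = 0" using linear_0[OF liftv_linear] by simp
    moreover have "liftv d (phi_inv d x) m = x m"
      by (rule lift_phi[OF d2]) (use x(3) m in \<open>auto simp: H_def V_def\<close>)
    ultimately show ?thesis by simp
  qed
  have sigH: "Defs.sigma i j \<in> H" if "i \<in> V" "j \<in> V" for i j
    using sigma_H that by (simp add: H_def V_def)
  have Gs_form: "g \<in> Gs \<longleftrightarrow> (\<exists>s i j. s\<in>{1,-1} \<and> {i,j} \<in> E \<and> g = s *\<^sub>R Defs.sigma i j)" for g
  proof -
    have eqf: "(\<lambda>k. s * Defs.sigma i j k) = s *\<^sub>R Defs.sigma i j" for s i j by (simp add: fun_eq_iff)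
    have eV: "{i,j} \<in> E \<Longrightarrow> i \<in> V \<and> j \<in> V" for i j using edge_props[OF sg] by (simp add: V_def)
    show ?thesis
    proof
      assume "g \<in> Gs"
      then obtain s i j where sij: "s\<in>{1,-1}" "{i,j}\<in>E" "g = (\<lambda>k. s * Defs.sigma i j k)"
        unfolding Gs_def gens_on_def by blast
      show "\<exists>s i j. s\<in>{1,-1} \<and> {i,j} \<in> E \<and> g = s *\<^sub>R Defs.sigma i j"
        by (rule exI[of _ s], rule exI[of _ i], rule exI[of _ j]) (use sij eqf in simp)
    next
      assume "\<exists>s i j. s\<in>{1,-1} \<and> {i,j} \<in> E \<and> g = s *\<^sub>R Defs.sigma i j"
      then obtain s i j where sij: "s\<in>{1,-1}" "{i,j}\<in>E" "g = s *\<^sub>R Defs.sigma i j" by blast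
      have "i \<in> V" "j \<in> V" using eV[OF sij(2)] by auto
      then have "(\<lambda>k. s * Defs.sigma i j k) \<in> gens_on E V" unfolding gens_on_def using sij by blast
      then show "g \<in> Gs" unfolding Gs_def using sij(3) eqf by metis
    qed
  qed
  have PRn: "P \<subseteq> Rn D" unfolding P_def
    by (rule hull_minimal[where S=convex, OF _ Rn_convex]) (use phi_inv_Rn in \<open>auto simp: D_def\<close>)
  have cP: "convex P" unfolding P_def by simp
  have edge: "Defs.sigma i j \<in> W1 \<or> Defs.sigma i j \<in> W2" if e: "{i,j} \<in> E" for i j
  proof -
    have ijp: "i \<in> V" "j \<in> V" "i \<noteq> j" using edge_props[OF sg e] by (auto simp: V_def)
    define p where "p = phi_inv d (Defs.sigma i j)"
    have "\<exists>s i' j'. s\<in>{1,-1} \<and> {i',j'} \<in> E \<and> Defs.sigma i j = s *\<^sub>R Defs.sigma i' j'"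
      by (rule exI[of _ 1], rule exI[of _ i], rule exI[of _ j]) (simp add: e)
    then have pG: "Defs.sigma i j \<in> Gs" using Gs_form by blast
    have pP: "p \<in> P" unfolding p_def P_def by (rule hull_inc) (use pG in blast)
    define phi where "phi y = liftv d y i - liftv d y j" for y
    have linphi2: "linear phi"
    proof (rule linearI)
      fix b1 b2 :: "nat \<Rightarrow> real"
      show "phi (b1 + b2) = phi b1 + phi b2"
        unfolding phi_def linear_add[OF liftv_linear] by simp
    next
      fix r :: real and b :: "nat \<Rightarrow> real"
      show "phi (r *\<^sub>R b) = r *\<^sub>R phi b"
        unfolding phi_def linear_scale[OF liftv_linear] by (simp add: right_diff_distrib)
    qed
    have phix: "phi (phi_inv d x) = x i - x j" if "(\<Sum>m\<in>{1..d}. x m) = 0" for x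
      unfolding phi_def using lift_phi[OF d2 that] ijp by (simp add: V_def)
    have gen: "phi g \<le> 2 \<and> (phi g = 2 \<longrightarrow> g = p)" if g: "g \<in> phi_inv d ` Gs" for g
    proof -
      obtain x where x: "x \<in> Gs" "g = phi_inv d x" using g by blast
      obtain s k l where skl: "s\<in>{1,-1}" "{k,l}\<in>E" "x = s *\<^sub>R Defs.sigma k l" using x(1) Gs_form by blast
      have klp: "k \<in> V" "l \<in> V" "k \<noteq> l" using edge_props[OF sg skl(2)] by (auto simp: V_def)
      have "(\<Sum>m\<in>{1..d}. x m) = 0" using sigma_sum0[of k d l s] klp skl(3) by (simp add: V_def)
      then have pg: "phi g = s * Defs.sigma k l i - s * Defs.sigma k l j" using phix x(2) skl(3) by simp
      show ?thesis
      proof (cases "s = 1")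
        case True
        have le: "phi g \<le> 2" using pg True by (auto simp: sigma_def)
        have "phi g = 2 \<longrightarrow> k = i \<and> l = j" using pg True ijp(3) klp(3) by (auto simp: sigma_def split: if_splits)
        then have "phi g = 2 \<longrightarrow> x = Defs.sigma i j" using skl(3) True by auto
        then show ?thesis using le x(2) p_def by auto
      next
        case False
        then have s: "s = -1" using skl(1) by auto
        have le: "phi g \<le> 2" using pg s by (auto simp: sigma_def)
        have "phi g = 2 \<longrightarrow> k = j \<and> l = i" using pg s ijp(3) klp(3) by (auto simp: sigma_def split: if_splits)
        moreover have "(-1::real) *\<^sub>R Defs.sigma j i = Defs.sigma i j" using sigma_neg[of i j] by simp
        ultimately have "phi g = 2 \<longrightarrow> x = Defs.sigma i j" using skl(3) s by auto
        then show ?thesis using le x(2) p_def by auto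
      qed
    qed
    have phip: "phi p = 2"
    proof -
      have "(\<Sum>m\<in>{1..d}. Defs.sigma i j m) = 0" using sigma_H ijp by (simp add: V_def)
      then have "phi p = Defs.sigma i j i - Defs.sigma i j j" unfolding p_def by (rule phix)
      then show ?thesis using ijp(3) by (simp add: sigma_def)
    qed
    have LpQ: "L p \<in> Q" using LP pP by blast
    obtain F c where F: "finite F" "F \<subseteq> P1 \<union> shift_by D1 ` P2" "\<forall>x\<in>F. 0 \<le> c x" "sum c F = 1"
        "(\<Sum>w\<in>F. c w *\<^sub>R w) = L p"
      using LpQ unfolding Q_def convex_hull_explicit by blast
    have "\<forall>w\<in>F. \<exists>q. q \<in> P \<and> w = L q"
    proof
      fix w assume "w \<in> F"
      then have "w \<in> Q" unfolding Q_def using F(2) by (intro hull_inc) blast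
      then show "\<exists>q. q \<in> P \<and> w = L q" using LP by blast
    qed
    then obtain qf where qf: "\<forall>w\<in>F. qf w \<in> P \<and> w = L (qf w)" by (metis (no_types))
    have sumP: "(\<Sum>w\<in>F. c w *\<^sub>R qf w) \<in> P"
      by (rule convex_sum[OF F(1) cP F(4)]) (use F(3) qf in auto)
    have "L (\<Sum>w\<in>F. c w *\<^sub>R qf w) = (\<Sum>w\<in>F. c w *\<^sub>R L (qf w))"
      by (simp add: linear_sum[OF linL] linear_scale[OF linL])
    also have "\<dots> = (\<Sum>w\<in>F. c w *\<^sub>R w)" using qf by (intro sum.cong refl) auto
    finally have "L (\<Sum>w\<in>F. c w *\<^sub>R qf w) = L p" using F(5) by simp
    then have peq: "(\<Sum>w\<in>F. c w *\<^sub>R qf w) = p"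
      using lin_inj[OF UD] sumP pP PRn unfolding L_def by blast
    have qle: "phi (qf w) \<le> 2" if "w \<in> F" for w
      by (rule face_le[OF linphi2 _ , of "phi_inv d ` Gs"]) (use gen qf that in \<open>auto simp: P_def\<close>)
    have "phi p = (\<Sum>w\<in>F. c w * phi (qf w))"
      unfolding peq[symmetric] by (simp add: linear_sum[OF linphi2] linear_scale[OF linphi2])
    then have "(\<Sum>w\<in>F. c w * (2 - phi (qf w))) = 0"
      using phip F(4) by (simp add: right_diff_distrib sum_subtractf sum_distrib_right[symmetric])
    moreover have t0: "\<forall>w\<in>F. c w * (2 - phi (qf w)) \<ge> 0" using F(3) qle by auto
    moreover have "(\<Sum>w\<in>F. c w * (2 - phi (qf w))) = 0 \<longleftrightarrow> (\<forall>w\<in>F. c w * (2 - phi (qf w)) = 0)"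
      by (rule sum_nonneg_eq_0_iff[OF F(1)]) (use t0 in blast)
    ultimately have z: "\<forall>w\<in>F. c w * (2 - phi (qf w)) = 0" by blast
    obtain w where w: "w \<in> F" "c w \<noteq> 0"
    proof (rule ccontr)
      assume "\<not> thesis"
      then have "\<forall>w\<in>F. c w = 0" using that by blast
      then have "sum c F = 0" by simp
      then show False using F(4) by simp
    qed
    have "c w * (2 - phi (qf w)) = 0" using z w(1) by blast
    then have "phi (qf w) = 2" using w(2) by simp
    moreover have "qf w \<in> convex hull (phi_inv d ` Gs)" using qf w(1) P_def by blast
    ultimately have "qf w = p"
      using face_eq[OF linphi2, of "phi_inv d ` Gs" 2 p "qf w"] gen by auto
    then have wLp: "w = L p" using qf w(1) by blast
    have "w \<in> P1 \<or> w \<in> shift_by D1 ` P2" using F(2) w(1) by blast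
    then show ?thesis
    proof
      assume "w \<in> P1"
      then have "w \<in> Rn D1" using fano_sub[OF f1] by blast
      then have "p \<in> Y1" using wLp by (simp add: Y1_def Rn_def)
      then show ?thesis by (simp add: W1_def p_def)
    next
      assume "w \<in> shift_by D1 ` P2"
      then obtain b where "w = shift_by D1 b" by blast
      then have "p \<in> Y2" using wLp by (simp add: Y2_def shift_by_def)
      then show ?thesis by (simp add: W2_def p_def)
    qed
  qed
  have ex1: "\<exists>i j. {i,j} \<in> E \<and> Defs.sigma i j \<in> W1"
  proof (rule ccontr)
    assume "\<not> (\<exists>i j. {i,j} \<in> E \<and> Defs.sigma i j \<in> W1)"
    then have allW: "Defs.sigma i j \<in> W2" if "{i,j} \<in> E" for i j using edge that by blast
    have "phi_inv d ` Gs \<subseteq> Y2"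
    proof
      fix z assume "z \<in> phi_inv d ` Gs"
      then obtain g where g: "g \<in> Gs" "z = phi_inv d g" by blast
      then obtain s i j where sij: "{i,j}\<in>E" "g = s *\<^sub>R Defs.sigma i j" using Gs_form by blast
      have "g \<in> W2" unfolding sij(2) by (rule subspace_scale[OF W2s allW[OF sij(1)]])
      then show "z \<in> Y2" using g(2) by (simp add: W2_def)
    qed
    then have "P \<subseteq> Y2" unfolding P_def by (rule hull_minimal[where S=convex, OF _ subspace_imp_convex[OF Y2s]])
    then have QZ: "\<forall>z\<in>Q. \<forall>k<D1. z k = 0" using LP by (auto simp: Y2_def)
    obtain e where e: "e > 0" "(\<lambda>k. if k = 0 then e else 0) \<in> P1" using fano_box[OF f1 D(1)] by blast
    have "(\<lambda>k. if k = 0 then e else 0) \<in> Q" unfolding Q_def by (rule hull_inc) (use e in auto)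
    note h0 = bspec[OF QZ this]
    have d0: "(0::nat) < D1" using D(1) by simp
    have "e = 0" using h0[rule_format, OF d0] by simp
    then show False using e(1) by simp
  qed
  have ex2: "\<exists>i j. {i,j} \<in> E \<and> Defs.sigma i j \<in> W2"
  proof (rule ccontr)
    assume "\<not> (\<exists>i j. {i,j} \<in> E \<and> Defs.sigma i j \<in> W2)"
    then have allW: "Defs.sigma i j \<in> W1" if "{i,j} \<in> E" for i j using edge that by blast
    have "phi_inv d ` Gs \<subseteq> Y1"
    proof
      fix z assume "z \<in> phi_inv d ` Gs"
      then obtain g where g: "g \<in> Gs" "z = phi_inv d g" by blast
      then obtain s i j where sij: "{i,j}\<in>E" "g = s *\<^sub>R Defs.sigma i j" using Gs_form by blast
      have "g \<in> W1" unfolding sij(2) by (rule subspace_scale[OF W1s allW[OF sij(1)]])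
      then show "z \<in> Y1" using g(2) by (simp add: W1_def)
    qed
    then have "P \<subseteq> Y1" unfolding P_def by (rule hull_minimal[where S=convex, OF _ subspace_imp_convex[OF Y1s]])
    then have QZ: "\<forall>z\<in>Q. \<forall>k\<ge>D1. z k = 0" using LP by (auto simp: Y1_def)
    obtain e where e: "e > 0" "(\<lambda>k. if k = 0 then e else 0) \<in> P2" using fano_box[OF f2 D(2)] by blast
    have "shift_by D1 (\<lambda>k. if k = 0 then e else 0) \<in> Q" unfolding Q_def by (rule hull_inc) (use e in auto)
    note h0 = bspec[OF QZ this]
    have "shift_by D1 (\<lambda>k. if k = 0 then e else 0) D1 = 0" by (rule h0[rule_format]) simp
    then show False using e(1) by (simp add: shift_by_def)
  qed
  define A1 where "A1 = {x. \<exists>y. {x,y} \<in> E \<and> Defs.sigma x y \<in> W1}"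
  define A2 where "A2 = {x. \<exists>y. {x,y} \<in> E \<and> Defs.sigma x y \<in> W2}"
  obtain i j where ij: "{i,j} \<in> E" "Defs.sigma i j \<in> W1" using ex1 by blast
  obtain i' j' where ij': "{i',j'} \<in> E" "Defs.sigma i' j' \<in> W2" using ex2 by blast
  have iA1: "i \<in> A1" using ij by (auto simp: A1_def)
  have iA2: "i' \<in> A2" using ij' by (auto simp: A2_def)
  have iV: "i \<in> V" "i' \<in> V" using edge_props[OF sg ij(1)] edge_props[OF sg ij'(1)] by (auto simp: V_def)
  have conn: "(Rel V E)\<^sup>*\<^sup>* i i'"
    using tc iV unfolding two_connected_def graph_connected_def connected_on_def Rel_def V_def by blast
  have reach1: "x \<in> A1 \<or> (\<exists>v. v \<in> A1 \<and> v \<in> A2)" if "(Rel V E)\<^sup>*\<^sup>* i x" for x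
    using that
  proof (induction rule: rtranclp_induct)
    case base then show ?case using iA1 by simp
  next
    case (step x y)
    have exy: "{x,y} \<in> E" using step(2) by (simp add: Rel_def)
    from step(3) show ?case
    proof
      assume xA: "x \<in> A1"
      show ?thesis
      proof (cases "Defs.sigma x y \<in> W1")
        case True
        then have "Defs.sigma y x \<in> W1" using sigma_neg[of y x] subspace_neg[OF W1s] by simp
        moreover have "{y,x} \<in> E" using exy by (simp add: insert_commute)
        ultimately show ?thesis by (auto simp: A1_def)
      next
        case False
        then have "Defs.sigma x y \<in> W2" using edge[OF exy] by blast
        then show ?thesis using xA exy by (auto simp: A2_def)
      qed
    qed blast
  qed
  obtain v where v: "v \<in> A1" "v \<in> A2" using reach1[OF conn] iA2 by blast
  obtain a where a: "{v,a} \<in> E" "Defs.sigma v a \<in> W1" using v(1) by (auto simp: A1_def)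
  obtain b where b: "{v,b} \<in> E" "Defs.sigma v b \<in> W2" using v(2) by (auto simp: A2_def)
  have va: "v \<in> V" "a \<in> V" "v \<noteq> a" using edge_props[OF sg a(1)] by (auto simp: V_def)
  have vb: "b \<in> V" "v \<noteq> b" using edge_props[OF sg b(1)] by (auto simp: V_def)
  have conn2: "(Rel (V - {v}) E)\<^sup>*\<^sup>* a b"
  proof -
    have "connected_on ({1..d} - {v}) E" using tc va(1) unfolding two_connected_def V_def by blast
    then show ?thesis using va vb unfolding connected_on_def Rel_def V_def by blast
  qed
  have invar: "\<exists>u1 u2. u1 \<in> W1 \<and> u2 \<in> W2 \<and> u1 \<in> H \<and> u2 \<in> H \<and> Defs.sigma v x = u1 + u2 \<and> u1 v = 1"
    if "(Rel (V - {v}) E)\<^sup>*\<^sup>* a x" for x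
    using that
  proof (induction rule: rtranclp_induct)
    case base
    show ?case
      apply (rule exI[of _ "Defs.sigma v a"], rule exI[of _ 0])
      using a(2) subspace_0[OF W2s] subspace_0[OF Hs] sigH[OF va(1,2)] va(3) by (simp add: sigma_def zero_fun_def)
  next
    case (step x y)
    obtain u1 u2 where u: "u1 \<in> W1" "u2 \<in> W2" "u1 \<in> H" "u2 \<in> H" "Defs.sigma v x = u1 + u2" "u1 v = 1"
      using step(3) by blast
    have xy: "x \<in> V" "y \<in> V" "x \<noteq> v" "y \<noteq> v" "{x,y} \<in> E" using step(2) by (auto simp: Rel_def)
    have sxy: "Defs.sigma v y = Defs.sigma v x + Defs.sigma x y" by (simp add: sigma_def fun_eq_iff)
    have sv: "Defs.sigma x y v = 0" using xy by (simp add: sigma_def)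
    have sH: "Defs.sigma x y \<in> H" using sigH xy by simp
    from edge[OF xy(5)] show ?case
    proof
      assume w: "Defs.sigma x y \<in> W1"
      have e: "Defs.sigma v y = (u1 + Defs.sigma x y) + u2" using sxy u(5) by (simp add: algebra_simps)
      have e1: "(u1 + Defs.sigma x y) v = 1" using u(6) sv by simp
      have m1: "u1 + Defs.sigma x y \<in> W1" by (rule subspace_add[OF W1s u(1) w])
      have m2: "u1 + Defs.sigma x y \<in> H" by (rule subspace_add[OF Hs u(3) sH])
      show ?thesis
        apply (rule exI[of _ "u1 + Defs.sigma x y"], rule exI[of _ u2])
        using m1 m2 u(2) u(4) e e1 by blast
    next
      assume w: "Defs.sigma x y \<in> W2"
      have e: "Defs.sigma v y = u1 + (u2 + Defs.sigma x y)" using sxy u(5) by (simp add: algebra_simps)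
      have m1: "u2 + Defs.sigma x y \<in> W2" by (rule subspace_add[OF W2s u(2) w])
      have m2: "u2 + Defs.sigma x y \<in> H" by (rule subspace_add[OF Hs u(4) sH])
      show ?thesis
        apply (rule exI[of _ u1], rule exI[of _ "u2 + Defs.sigma x y"])
        using m1 m2 u(1) u(3) u(6) e by blast
    qed
  qed
  obtain u1 u2 where u: "u1 \<in> W1" "u2 \<in> W2" "u1 \<in> H" "u2 \<in> H" "Defs.sigma v b = u1 + u2" "u1 v = 1"
    using invar[OF conn2] by blast
  have "u1 = Defs.sigma v b - u2" using u(5) by simp
  then have "u1 \<in> W2" using subspace_diff[OF W2s b(2) u(2)] by simp
  then have "u1 v = 0" using inj[OF u(1) _ u(3) va(1)] by simp
  then show False using u(6) by simp
qed


lemma rtranclp_sym: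
  assumes "\<And>a b. R a b \<Longrightarrow> R b a" "R\<^sup>*\<^sup>* x y"
  shows "R\<^sup>*\<^sup>* y x"
  using assms(2)
proof (induction rule: rtranclp_induct)
  case base then show ?case by simp
next
  case (step y z)
  then show ?case using assms(1) by (meson converse_rtranclp_into_rtranclp)
qed

lemma rel_in: "(Rel S E)\<^sup>*\<^sup>* x y \<Longrightarrow> x \<in> S \<Longrightarrow> y \<in> S"
  by (induction rule: rtranclp_induct) (auto simp: Rel_def)

lemma Rel_sym: "Rel S E a b \<Longrightarrow> Rel S E b a"
  by (auto simp: Rel_def insert_commute)

lemma conn_part:
  assumes conn: "connected_on V E" and vV: "v \<in> V" and XV: "X \<subseteq> V - {v}"
    and cl: "\<And>x y. {x,y} \<in> E \<Longrightarrow> x \<in> X \<Longrightarrow> y \<noteq> v \<Longrightarrow> y \<in> X"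
    and u: "u \<in> X"
  shows "(Rel (insert v X) E)\<^sup>*\<^sup>* v u"
proof -
  have uV: "u \<in> V" using u XV by auto
  have path: "(Rel V E)\<^sup>*\<^sup>* u v" using conn uV vV unfolding connected_on_def Rel_def by blast
  have "(Rel (insert v X) E)\<^sup>*\<^sup>* u y \<or> (Rel (insert v X) E)\<^sup>*\<^sup>* u v" if "(Rel V E)\<^sup>*\<^sup>* u y" for y
    using that
  proof (induction rule: rtranclp_induct)
    case base then show ?case by simp
  next
    case (step y z)
    from step(3) show ?case
    proof
      assume uy: "(Rel (insert v X) E)\<^sup>*\<^sup>* u y"
      have yin: "y \<in> insert v X" using rel_in[OF uy] u by blast
      have yz: "{y,z} \<in> E" "z \<in> V" using step(2) by (auto simp: Rel_def)
      show ?thesis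
      proof (cases "y = v")
        case True then show ?thesis using uy by simp
      next
        case False
        then have yX: "y \<in> X" using yin by simp
        show ?thesis
        proof (cases "z = v")
          case True
          then have "Rel (insert v X) E y z" using yX yz by (auto simp: Rel_def)
          then show ?thesis using uy True by (meson rtranclp.rtrancl_into_rtrancl)
        next
          case False
          then have "z \<in> X" using cl[OF yz(1) yX] by simp
          then have "Rel (insert v X) E y z" using yX yz by (auto simp: Rel_def)
          then show ?thesis using uy by (meson rtranclp.rtrancl_into_rtrancl)
        qed
      qed
    qed simp
  qed
  then have "(Rel (insert v X) E)\<^sup>*\<^sup>* u v" using path by blast
  then show ?thesis using rtranclp_sym[of "Rel (insert v X) E", OF Rel_sym] by blast
qed

lemma sum_delta_mult: "(j::nat) < D \<Longrightarrow> (\<Sum>k<D. c k * (if k = j then 1 else 0)) = (c j :: real)"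
proof -
  assume j: "j < D"
  have "(\<Sum>k<D. c k * (if k = j then 1 else 0)) = (\<Sum>k<D. if k = j then c k else 0)"
    by (rule sum.cong) auto
  also have "\<dots> = c j" using j by simp
  finally show ?thesis .
qed

lemma lin_map_ek: "j < D \<Longrightarrow> lin_map D W (ek j) = (\<lambda>k. if k < D then of_int (W k j) else 0)"
  unfolding lin_map_def ek_def fun_eq_iff using sum_delta_mult[of j D] by simp

lemma ek_Rn: "j < D \<Longrightarrow> ek j \<in> Rn D"
  by (simp add: ek_def Rn_def)

lemma unimod_by_maps:
  assumes WU: "\<forall>y\<in>Rn D. lin_map D W (lin_map D U y) = y"
    and UW: "\<forall>y\<in>Rn D. lin_map D U (lin_map D W y) = y"
  shows "unimodular D U"
  unfolding unimodular_def
proof (intro exI[of _ W] allI impI conjI)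
  fix i j assume ij: "i < D" "j < D"
  have "lin_map D U (lin_map D W (ek j)) i = ek j i" using UW ek_Rn[OF ij(2)] by simp
  moreover have "lin_map D U (lin_map D W (ek j)) i = (\<Sum>k<D. of_int (U i k) * of_int (W k j))"
    using ij by (simp add: lin_map_ek) (simp add: lin_map_def)
  ultimately have A: "(\<Sum>k<D. of_int (U i k) * of_int (W k j)) = (ek j i :: real)" by simp
  have "(of_int (\<Sum>k<D. U i k * W k j) :: real) = of_int (if i = j then 1 else 0)"
    unfolding of_int_sum of_int_mult A by (simp add: ek_def)
  then show "(\<Sum>k<D. U i k * W k j) = (if i = j then 1 else 0)" by (simp only: of_int_eq_iff)
next
  fix i j assume ij: "i < D" "j < D"
  have "lin_map D W (lin_map D U (ek j)) i = ek j i" using WU ek_Rn[OF ij(2)] by simp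
  moreover have "lin_map D W (lin_map D U (ek j)) i = (\<Sum>k<D. of_int (W i k) * of_int (U k j))"
    using ij by (simp add: lin_map_ek) (simp add: lin_map_def)
  ultimately have A: "(\<Sum>k<D. of_int (W i k) * of_int (U k j)) = (ek j i :: real)" by simp
  have "(of_int (\<Sum>k<D. W i k * U k j) :: real) = of_int (if i = j then 1 else 0)"
    unfolding of_int_sum of_int_mult A by (simp add: ek_def)
  then show "(\<Sum>k<D. W i k * U k j) = (if i = j then 1 else 0)" by (simp only: of_int_eq_iff)
qed


lemma gens_mono: "S \<subseteq> S' \<Longrightarrow> gens_on E S \<subseteq> gens_on E S'"
  unfolding gens_on_def by blast

lemma dir1:
  assumes d2: "d \<ge> 2" and sg: "simple_graph d E" and gc: "graph_connected d E"
    and ntc: "\<not> two_connected d E"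
  shows "splits (d - 1) (sym_edge_polytope d E)"
proof -
  define V where "V = {1..d}"
  define D where "D = d - 1"
  have connV: "connected_on V E" using gc by (simp add: graph_connected_def V_def)
  obtain v where vV: "v \<in> V" and nc: "\<not> connected_on (V - {v}) E"
    using ntc gc unfolding two_connected_def V_def by blast
  define V' where "V' = V - {v}"
  obtain a b where ab: "a \<in> V'" "b \<in> V'" "\<not> (Rel V' E)\<^sup>*\<^sup>* a b"
    using nc unfolding connected_on_def Rel_def V'_def by blast
  define C where "C = {x \<in> V'. (Rel V' E)\<^sup>*\<^sup>* a x}"
  define B where "B = V' - C"
  have aC: "a \<in> C" using ab by (simp add: C_def)
  have bB: "b \<in> B" using ab by (simp add: C_def B_def)
  have CV: "C \<subseteq> V - {v}" "B \<subseteq> V - {v}" by (auto simp: C_def B_def V'_def)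
  have CB: "C \<inter> B = {}" "C \<union> B = V'" by (auto simp: B_def C_def)
  have eV: "x \<in> V \<and> y \<in> V \<and> x \<noteq> y" if "{x,y}\<in>E" for x y using edge_props[OF sg that] by (simp add: V_def)
  have clC: "y \<in> C" if e: "{x,y}\<in>E" and x: "x\<in>C" and y: "y\<noteq>v" for x y
  proof -
    have r1: "Rel V' E x y" using eV[OF e] e x y by (auto simp: Rel_def V'_def C_def)
    have "(Rel V' E)\<^sup>*\<^sup>* a x" using x by (simp add: C_def)
    from this r1 have "(Rel V' E)\<^sup>*\<^sup>* a y" by (rule rtranclp.rtrancl_into_rtrancl)
    then show "y \<in> C" using eV[OF e] y by (simp add: C_def V'_def)
  qed
  have clB: "y \<in> B" if e: "{x,y}\<in>E" and x: "x\<in>B" and y: "y\<noteq>v" for x y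
  proof -
    have yV': "y \<in> V'" using eV[OF e] y by (simp add: V'_def)
    have xv: "x \<noteq> v" using x by (simp add: B_def V'_def)
    have "y \<notin> C"
    proof
      assume yC: "y \<in> C"
      have "{y,x} \<in> E" using e by (simp add: insert_commute)
      then have "x \<in> C" using clC yC xv by blast
      then show False using x by (simp add: B_def)
    qed
    then show "y \<in> B" using yV' by (simp add: B_def)
  qed
  have finV: "finite V" by (simp add: V_def)
  have finC: "finite C" "finite B" using CV finV by (auto intro: finite_subset)
  define D1 where "D1 = card C"
  define D2 where "D2 = card B"
  have D1: "D1 \<ge> 1" using aC finC(1) card_gt_0_iff[of C] by (auto simp: D1_def)
  have D2: "D2 \<ge> 1" using bB finC(2) card_gt_0_iff[of B] by (auto simp: D2_def)
  have DD: "D1 + D2 = D"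
  proof -
    have "D1 + D2 = card V'" unfolding D1_def D2_def using card_Un_disjoint[OF finC CB(1)] CB(2) by simp
    also have "\<dots> = d - 1" using vV by (simp add: V'_def V_def)
    finally show ?thesis by (simp add: D_def)
  qed
  obtain h1 where h1: "bij_betw h1 {..<D1} C"
    using ex_bij_betw_nat_finite[OF finC(1)] by (auto simp: D1_def atLeast0LessThan)
  obtain h2 where h2: "bij_betw h2 {..<D2} B"
    using ex_bij_betw_nat_finite[OF finC(2)] by (auto simp: D2_def atLeast0LessThan)
  define s0 where "s0 k = (if k < D1 then h1 k else h2 (k - D1))" for k
  have s0C: "s0 k = h1 k" "s0 k \<in> C" if "k < D1" for k
    using that h1 by (auto simp: s0_def bij_betw_def)
  have s0B: "s0 k = h2 (k - D1)" "s0 k \<in> B" if "D1 \<le> k" "k < D" for k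
    using that h2 DD by (auto simp: s0_def bij_betw_def)
  have h1i: "inj_on h1 {..<D1}" "h1 ` {..<D1} = C" using h1 by (auto simp: bij_betw_def)
  have h2i: "inj_on h2 {..<D2}" "h2 ` {..<D2} = B" using h2 by (auto simp: bij_betw_def)
  have s0V': "s0 k \<in> V'" if "k < D" for k
    using s0C(2)[of k] s0B(2)[of k] that CB(2) by (cases "k < D1") auto
  have s0inj: "inj_on s0 {..<D}"
  proof (rule inj_onI)
    fix k k' assume k: "k \<in> {..<D}" "k' \<in> {..<D}" and eq: "s0 k = s0 k'"
    show "k = k'"
    proof (cases "k < D1")
      case True
      show ?thesis
      proof (cases "k' < D1")
        case True2: True
        then show ?thesis using True eq s0C h1i(1) by (auto simp: inj_on_def)
      next
        case False
        then have "s0 k' \<in> B" using s0B k by auto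
        moreover have "s0 k \<in> C" using s0C True by auto
        ultimately show ?thesis using eq CB(1) by auto
      qed
    next
      case False
      show ?thesis
      proof (cases "k' < D1")
        case True
        then have "s0 k' \<in> C" using s0C by auto
        moreover have "s0 k \<in> B" using s0B k False by auto
        ultimately show ?thesis using eq CB(1) by auto
      next
        case False2: False
        have "h2 (k - D1) = h2 (k' - D1)" using eq s0B k False False2 by auto
        moreover have "k - D1 < D2" "k' - D1 < D2" using k DD False False2 by auto
        ultimately have "k - D1 = k' - D1" using h2i(1) by (auto simp: inj_on_def)
        then show ?thesis using False False2 by auto
      qed
    qed
  qed
  have s0img: "s0 ` {..<D} = V'"
  proof
    show "s0 ` {..<D} \<subseteq> V'" using s0V' by auto
    show "V' \<subseteq> s0 ` {..<D}"
    proof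
      fix y assume "y \<in> V'"
      then have "y \<in> C \<or> y \<in> B" using CB(2) by auto
      then show "y \<in> s0 ` {..<D}"
      proof
        assume "y \<in> C"
        then obtain m where m: "m < D1" "y = h1 m" using h1i(2) by auto
        then have "s0 m = y" "m < D" using s0C DD by auto
        then show ?thesis by force
      next
        assume "y \<in> B"
        then obtain m where m: "m < D2" "y = h2 m" using h2i(2) by auto
        then have "s0 (m + D1) = y" "m + D1 < D" using DD by (auto simp: s0_def)
        then show ?thesis by force
      qed
    qed
  qed
  have s0bij: "bij_betw s0 {..<D} V'" using s0inj s0img by (simp add: bij_betw_def)
  define s0i where "s0i = inv_into {..<D} s0"
  have s0i1: "s0i u < D" "s0 (s0i u) = u" if "u \<in> V'" for u
    using that s0img inv_into_into[of u s0 "{..<D}"] f_inv_into_f[of u s0 "{..<D}"] by (auto simp: s0i_def)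
  have s0i2: "s0i (s0 k) = k" if "k < D" for k using inv_into_f_f[OF s0inj] that by (simp add: s0i_def)
  have vnV': "v \<notin> V'" by (simp add: V'_def)
  have sumV: "(\<Sum>u\<in>V. x u) = x v + (\<Sum>u\<in>V'. x u)" for x :: "nat \<Rightarrow> real"
    unfolding V'_def using sum.remove[OF finV vV] by simp
  have sumV': "(\<Sum>k<D. x (s0 k)) = (\<Sum>u\<in>V'. x u)" for x :: "nat \<Rightarrow> real"
    by (rule sum.reindex_bij_betw[OF s0bij])
  have dD: "d = D + 1" using d2 by (simp add: D_def)
  have s0range: "1 \<le> s0 k \<and> s0 k \<le> d \<and> s0 k \<noteq> v" if "k < D" for k
    using s0V'[OF that] by (simp add: V'_def V_def)
  define U where "U k m = (if s0 k = d then -1 else if m + 1 = s0 k then 1 else 0 :: int)" for k m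
  define Wm where "Wm m k = (if m + 1 = v then -1 else if s0 k = m + 1 then 1 else 0 :: int)" for m k
  have UT: "lin_map D U (phi_inv d x) = Th s0 D x" if x: "(\<Sum>m\<in>V. x m) = 0" for x
  proof (rule ext)
    fix k
    show "lin_map D U (phi_inv d x) k = Th s0 D x k"
    proof (cases "k < D")
      case False then show ?thesis by (simp add: lin_map_def Th_def)
    next
      case True
      have pk: "phi_inv d x m = x (m+1)" if "m < D" for m using that by (simp add: phi_inv_def D_def)
      have "lin_map D U (phi_inv d x) k = (\<Sum>m<D. of_int (U k m) * phi_inv d x m)"
        by (simp add: lin_map_def True)
      also have "\<dots> = (\<Sum>m<D. of_int (U k m) * x (m+1))" by (rule sum.cong) (auto simp: pk)
      also have "\<dots> = x (s0 k)"
      proof (cases "s0 k = d")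
        case True2: True
        have "(\<Sum>m<D. of_int (U k m) * x (m+1)) = - (\<Sum>m<D. x (m+1))"
          by (simp add: U_def True2 sum_negf)
        also have "(\<Sum>m<D. x (m+1)) = (\<Sum>m\<in>{1..<d}. x m)" using sum_shift1[of x d] by (simp add: D_def)
        also have "(\<Sum>m\<in>{1..<d}. x m) = - x d" using x sum_1d[of d x] d2 by (simp add: V_def)
        finally show ?thesis using True2 by simp
      next
        case False2: False
        define m0 where "m0 = s0 k - 1"
        have m0: "m0 < D" "m0 + 1 = s0 k" using s0range[OF True] False2 dD by (auto simp: m0_def)
        have "(\<Sum>m<D. of_int (U k m) * x (m+1)) = (\<Sum>m<D. x (m+1) * (if m = m0 then 1 else 0))"
          by (rule sum.cong) (use m0 False2 in \<open>auto simp: U_def\<close>)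
        also have "\<dots> = x (m0 + 1)" by (rule sum_delta_mult[OF m0(1)])
        finally show ?thesis using m0 by simp
      qed
      finally show ?thesis using True by (simp add: Th_def)
    qed
  qed
  have WT: "lin_map D Wm (Th s0 D x) = phi_inv d x" if x: "(\<Sum>m\<in>V. x m) = 0" for x
  proof (rule ext)
    fix m
    show "lin_map D Wm (Th s0 D x) m = phi_inv d x m"
    proof (cases "m < D")
      case False then show ?thesis by (simp add: lin_map_def phi_inv_def D_def)
    next
      case True
      have "lin_map D Wm (Th s0 D x) m = (\<Sum>k<D. of_int (Wm m k) * x (s0 k))"
        by (simp add: lin_map_def True Th_def)
      also have "\<dots> = x (m + 1)"
      proof (cases "m + 1 = v")
        case True2: True
        have "(\<Sum>k<D. of_int (Wm m k) * x (s0 k)) = - (\<Sum>k<D. x (s0 k))"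
          using True2 by (simp add: Wm_def sum_negf)
        also have "\<dots> = x v" using sumV'[of x] sumV[of x] x by simp
        finally show ?thesis using True2 by simp
      next
        case False2: False
        have mV': "m + 1 \<in> V'" using True False2 dD by (simp add: V'_def V_def)
        define k0 where "k0 = s0i (m + 1)"
        have k0: "k0 < D" "s0 k0 = m + 1" using s0i1[OF mV'] by (auto simp: k0_def)
        have "(\<Sum>k<D. of_int (Wm m k) * x (s0 k)) = (\<Sum>k<D. x (s0 k) * (if k = k0 then 1 else 0))"
        proof (rule sum.cong[OF refl])
          fix k assume "k \<in> {..<D}"
          then have "s0 k = m + 1 \<longleftrightarrow> k = k0" using k0 s0inj by (auto simp: inj_on_def)
          then show "of_int (Wm m k) * x (s0 k) = x (s0 k) * (if k = k0 then 1 else 0)"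
            using False2 by (simp add: Wm_def)
        qed
        also have "\<dots> = x (s0 k0)" by (rule sum_delta_mult[OF k0(1)])
        finally show ?thesis using k0 by simp
      qed
      finally show ?thesis using True by (simp add: phi_inv_def D_def)
    qed
  qed
  have U3: "phi_inv d (liftv d y) = y \<and> (\<Sum>m\<in>V. liftv d y m) = 0" if y: "y \<in> Rn D" for y
  proof
    show "phi_inv d (liftv d y) = y"
    proof (rule ext)
      fix m show "phi_inv d (liftv d y) m = y m"
        using y by (cases "m < D") (auto simp: phi_inv_def liftv_def D_def Rn_def)
    qed
    have "(\<Sum>m\<in>{1..<d}. liftv d y m) = (\<Sum>k<d-1. liftv d y (k+1))" using sum_shift1[of "liftv d y" d] by simp
    also have "\<dots> = (\<Sum>k<d-1. y k)" by (rule sum.cong) (auto simp: liftv_def)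
    finally have s1: "(\<Sum>m\<in>{1..<d}. liftv d y m) = (\<Sum>k<d-1. y k)" .
    have s2: "liftv d y d = - (\<Sum>k<d-1. y k)" using d2 by (simp add: liftv_def)
    show "(\<Sum>m\<in>V. liftv d y m) = 0" using sum_1d[of d "liftv d y"] d2 s1 s2 by (simp add: V_def)
  qed
  have U4: "\<exists>x. (\<Sum>m\<in>V. x m) = 0 \<and> Th s0 D x = y" if y: "y \<in> Rn D" for y
  proof -
    define x where "x u = (if u \<in> V' then y (s0i u) else if u = v then - (\<Sum>k<D. y k) else 0)" for u
    have "Th s0 D x = y"
    proof (rule ext)
      fix k show "Th s0 D x k = y k"
        using y s0V' s0i2 by (cases "k < D") (auto simp: Th_def x_def Rn_def)
    qed
    moreover have "(\<Sum>m\<in>V. x m) = 0"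
    proof -
      have "(\<Sum>u\<in>V'. x u) = (\<Sum>k<D. x (s0 k))" using sumV'[of x] by simp
      also have "\<dots> = (\<Sum>k<D. y k)" by (rule sum.cong) (auto simp: x_def s0V' s0i2)
      finally show ?thesis using sumV[of x] vnV' by (simp add: x_def)
    qed
    ultimately show ?thesis by blast
  qed
  have unimod: "unimodular D U"
  proof (rule unimod_by_maps[where W = Wm])
    show "\<forall>y\<in>Rn D. lin_map D Wm (lin_map D U y) = y"
    proof
      fix y assume y: "y \<in> Rn D"
      have e: "y = phi_inv d (liftv d y)" using U3[OF y] by simp
      show "lin_map D Wm (lin_map D U y) = y"
        using UT[of "liftv d y"] WT[of "liftv d y"] U3[OF y] e by simp
    qed
    show "\<forall>y\<in>Rn D. lin_map D U (lin_map D Wm y) = y"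
    proof
      fix y assume y: "y \<in> Rn D"
      obtain x where x: "(\<Sum>m\<in>V. x m) = 0" "Th s0 D x = y" using U4[OF y] by blast
      show "lin_map D U (lin_map D Wm y) = y"
        using UT[OF x(1)] WT[OF x(1)] x(2) by simp
    qed
  qed
  have connC: "\<forall>u\<in>C. (Rel (insert v C) E)\<^sup>*\<^sup>* v u"
  proof
    fix u assume u: "u \<in> C"
    show "(Rel (insert v C) E)\<^sup>*\<^sup>* v u"
      by (rule conn_part[OF connV vV CV(1) _ u]) (rule clC)
  qed
  have connB: "\<forall>u\<in>B. (Rel (insert v B) E)\<^sup>*\<^sup>* v u"
  proof
    fix u assume u: "u \<in> B"
    show "(Rel (insert v B) E)\<^sup>*\<^sup>* v u"
      by (rule conn_part[OF connV vV CV(2) _ u]) (rule clB)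
  qed
  have vC: "v \<notin> C" "v \<notin> B" using CV by auto
  define G1 where "G1 = Th h1 D1 ` gens_on E (insert v C)"
  define G2 where "G2 = Th h2 D2 ` gens_on E (insert v B)"
  have fano1: "fano D1 (conv G1)" unfolding G1_def by (rule tree_fano[OF D1 h1 vC(1) connC])
  have fano2: "fano D2 (conv G2)" unfolding G2_def by (rule tree_fano[OF D2 h2 vC(2) connB])
  define Gs where "Gs = gens_on E V"
  have GsH: "(\<Sum>m\<in>V. g m) = 0" if gG: "g \<in> Gs" for g
  proof -
    obtain s i j where sij: "{i,j} \<in> E" "i \<in> V" "j \<in> V" "g = (\<lambda>k. s * Defs.sigma i j k)"
      using gG unfolding Gs_def gens_on_def by blast
    show ?thesis using sigma_sum0[of i d j s] sij by (simp add: V_def)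
  qed
  have cls: "(i \<in> insert v C \<and> j \<in> insert v C) \<or> (i \<in> insert v B \<and> j \<in> insert v B)"
    if e: "{i,j} \<in> E" for i j
  proof -
    have ij: "i \<in> V" "j \<in> V" "i \<noteq> j" using eV[OF e] by auto
    have "i = v \<or> i \<in> C \<or> i \<in> B" using ij(1) CB(2) by (auto simp: V'_def)
    then show ?thesis
    proof (elim disjE)
      assume "i = v"
      moreover have "j \<in> C \<or> j \<in> B" using ij CB(2) calculation by (auto simp: V'_def)
      ultimately show ?thesis by auto
    next
      assume iC: "i \<in> C"
      have "j = v \<or> j \<in> C" using clC[OF e iC] by auto
      then show ?thesis using iC by auto
    next
      assume iB: "i \<in> B"
      have "j = v \<or> j \<in> B" using clB[OF e iB] by auto
      then show ?thesis using iB by auto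
    qed
  qed
  have Gs_split: "Gs = gens_on E (insert v C) \<union> gens_on E (insert v B)"
  proof
    show "gens_on E (insert v C) \<union> gens_on E (insert v B) \<subseteq> Gs"
      unfolding Gs_def using gens_mono[of "insert v C" V E] gens_mono[of "insert v B" V E] vV CV by auto
    show "Gs \<subseteq> gens_on E (insert v C) \<union> gens_on E (insert v B)"
    proof
      fix g assume "g \<in> Gs"
      then obtain s i j where sij: "s \<in> {1,-1}" "{i,j} \<in> E" "g = (\<lambda>k. s * Defs.sigma i j k)"
        unfolding Gs_def gens_on_def by blast
      from cls[OF sij(2)] show "g \<in> gens_on E (insert v C) \<union> gens_on E (insert v B)"
      proof
        assume "i \<in> insert v C \<and> j \<in> insert v C"
        then have "g \<in> gens_on E (insert v C)" using sij unfolding gens_on_def by blast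
        then show ?thesis by blast
      next
        assume "i \<in> insert v B \<and> j \<in> insert v B"
        then have "g \<in> gens_on E (insert v B)" using sij unfolding gens_on_def by blast
        then show ?thesis by blast
      qed
    qed
  qed
  have gzero: "g u = 0" if gu: "g \<in> gens_on E (insert v X)" "u \<notin> insert v X" for g u X
  proof -
    obtain s i j where sij: "i \<in> insert v X" "j \<in> insert v X" "g = (\<lambda>k. s * Defs.sigma i j k)"
      using gu(1) unfolding gens_on_def by blast
    then have "u \<noteq> i" "u \<noteq> j" using gu(2) by auto
    then show ?thesis using sij(3) by (simp add: sigma_def)
  qed
  have T1: "Th s0 D g = Th h1 D1 g" if g: "g \<in> gens_on E (insert v C)" for g
  proof (rule ext)
    fix k
    show "Th s0 D g k = Th h1 D1 g k"
    proof (cases "k < D1")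
      case True then show ?thesis using s0C DD by (simp add: Th_def)
    next
      case False
      show ?thesis
      proof (cases "k < D")
        case True
        have "s0 k \<notin> insert v C" using s0B[OF _ True] False CB(1) vC by auto
        then show ?thesis using gzero[OF g] False True by (simp add: Th_def)
      qed (use False in \<open>simp add: Th_def\<close>)
    qed
  qed
  have T2: "Th s0 D g = shift_by D1 (Th h2 D2 g)" if g: "g \<in> gens_on E (insert v B)" for g
  proof (rule ext)
    fix k
    show "Th s0 D g k = shift_by D1 (Th h2 D2 g) k"
    proof (cases "k < D1")
      case True
      have "s0 k \<notin> insert v B" using s0C[OF True] CB(1) vC by auto
      then show ?thesis using gzero[OF g] True DD by (simp add: Th_def shift_by_def)
    next
      case False
      show ?thesis
      proof (cases "k < D")
        case True
        then show ?thesis using s0B[OF _ True] False DD by (simp add: Th_def shift_by_def)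
      qed (use False DD in \<open>simp add: Th_def shift_by_def\<close>)
    qed
  qed
  have img: "lin_map D U ` phi_inv d ` Gs = G1 \<union> shift_by D1 ` G2"
  proof -
    have "lin_map D U ` phi_inv d ` Gs = Th s0 D ` Gs"
      unfolding image_image using UT GsH by (intro image_cong) auto
    also have "\<dots> = Th s0 D ` gens_on E (insert v C) \<union> Th s0 D ` gens_on E (insert v B)"
      unfolding Gs_split by (rule image_Un)
    also have "Th s0 D ` gens_on E (insert v C) = G1"
      unfolding G1_def using T1 by (intro image_cong) auto
    also have "Th s0 D ` gens_on E (insert v B) = shift_by D1 ` G2"
      unfolding G2_def image_image using T2 by (intro image_cong) auto
    finally show ?thesis .
  qed
  have main: "lin_map D U ` sym_edge_polytope d E = conv (conv G1 \<union> shift_by D1 ` conv G2)"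
  proof -
    have "lin_map D U ` sym_edge_polytope d E = lin_map D U ` (convex hull (phi_inv d ` Gs))"
      using sym_eq[OF sg] by (simp add: conv_eq Gs_def V_def)
    also have "\<dots> = convex hull (lin_map D U ` phi_inv d ` Gs)"
      by (rule convex_hull_linear_image[OF lin_map_linear])
    also have "\<dots> = convex hull (G1 \<union> shift_by D1 ` G2)" by (simp only: img)
    also have "\<dots> = convex hull (convex hull G1 \<union> convex hull (shift_by D1 ` G2))"
      by (metis hull_Un_left hull_Un_right)
    also have "convex hull (shift_by D1 ` G2) = shift_by D1 ` (convex hull G2)"
      by (rule convex_hull_linear_image[OF shift_linear, symmetric])
    finally show ?thesis by (simp add: conv_eq)
  qed
  show ?thesis unfolding splits_def
    apply (rule exI[of _ U], rule exI[of _ D1], rule exI[of _ D2], rule exI[of _ "conv G1"], rule exI[of _ "conv G2"])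
    using unimod D1 D2 DD fano1 fano2 main by (simp add: D_def)
qed


theorem lemma3p3:
  fixes d :: nat and E :: "nat set set"
  assumes "d \<ge> 2" and "simple_graph d E" and "graph_connected d E"
  shows "\<not> splits (d - 1) (sym_edge_polytope d E) \<longleftrightarrow> two_connected d E"
proof
  assume "\<not> splits (d - 1) (sym_edge_polytope d E)"
  then show "two_connected d E" using dir1[OF assms] by blast
next
  assume "two_connected d E"
  then show "\<not> splits (d - 1) (sym_edge_polytope d E)" using dir2[OF assms(1,2)] by blast
qed

end
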